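(* Let $f:[0,1]\to(0,1)$ be a $C^3$ function whose unique fixed point is $1/2$, and assume $f'(1/2)=0$. Let $(\alpha_n,l_n)_{n\ge0}$ be an urn process associated to $f$. Then: (i) if $f''(1/2)>0$, then $\mathbb{E}[\delta_\infty^-]<+\infty$; (ii) if $f''(1/2)<0$, then $\mathbb{E}[\delta_\infty^+]<+\infty$; (iii) if $f''(1/2)=0$, then $\mathbb{E}[\delta_\infty^-]$ and $\mathbb{E}[\delta_\infty^+]$ are both finite. In all cases, $\delta_n$ converges almost surely to a limit $\delta_\infty$ (in $[-\infty,+\infty]$) and $\mathbb{E}[\delta_\infty]$ is well defined.
   Context: Urn process associated to $f$: a Markov chain $((\alpha_n,l_n),n\ge 0)$ on $[0,1]\times(0,+\infty)$ (arbitrary initial state) with $l_{n+1}=l_n+1$, and $\alpha_{n+1}=(l_n\alpha_n+1)/(l_n+1)$ with probability $f(\alpha_n)$, $\alpha_{n+1}=l_n\alpha_n/(l_n+1)$ with probability $1-f(\alpha_n)$. $\delta_n:=\sum_{k=0}^n(2f(\alpha_k)-1)$, $\delta^-_\infty:=\sum_{k\ge0}(2f(\alpha_k)-1)_-$, $\delta^+_\infty:=\sum_{k\ge0}(2f(\alpha_k)-1)_+$. *)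

theory Defs
  imports "HOL-Probability.Probability"
begin

text \<open>The conditional law is expressed on the generating
pi-system of cylinder events of the natural filtration.\<close>

definition urn_up :: "real \<Rightarrow> real \<Rightarrow> real" where
  "urn_up a l = (l * a + 1) / (l + 1)"

definition urn_down :: "real \<Rightarrow> real \<Rightarrow> real" where
  "urn_down a l = l * a / (l + 1)"

definition urn_process ::
  "'a measure \<Rightarrow> (real \<Rightarrow> real) \<Rightarrow> (nat \<Rightarrow> 'a \<Rightarrow> real) \<Rightarrow> (nat \<Rightarrow> 'a \<Rightarrow> real) \<Rightarrow> bool" where
  "urn_process M f \<alpha> l \<longleftrightarrow>
     prob_space M \<and>
     (\<forall>n. \<alpha> n \<in> borel_measurable M) \<and>
     (\<exists>a0 l0. 0 \<le> a0 \<and> a0 \<le> 1 \<and> 0 < l0 \<and>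
        (\<forall>\<omega>\<in>space M. \<alpha> 0 \<omega> = a0 \<and> l 0 \<omega> = l0)) \<and>
     (\<forall>n. \<forall>\<omega>\<in>space M. l (Suc n) \<omega> = l n \<omega> + 1) \<and>
     (\<forall>n. \<forall>\<omega>\<in>space M. \<alpha> (Suc n) \<omega> = urn_up (\<alpha> n \<omega>) (l n \<omega>) \<or>
                         \<alpha> (Suc n) \<omega> = urn_down (\<alpha> n \<omega>) (l n \<omega>)) \<and>
     (\<forall>n (B :: nat \<Rightarrow> real set). (\<forall>i. B i \<in> sets borel) \<longrightarrow>
        measure M {\<omega> \<in> space M. (\<forall>i\<le>n. \<alpha> i \<omega> \<in> B i) \<and>
                                 \<alpha> (Suc n) \<omega> = urn_up (\<alpha> n \<omega>) (l n \<omega>)}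
        = (\<integral>\<omega>. indicator {\<omega> \<in> space M. \<forall>i\<le>n. \<alpha> i \<omega> \<in> B i} \<omega> * f (\<alpha> n \<omega>) \<partial>M))"

definition urn_delta :: "(real \<Rightarrow> real) \<Rightarrow> (nat \<Rightarrow> 'a \<Rightarrow> real) \<Rightarrow> nat \<Rightarrow> 'a \<Rightarrow> real" where
  "urn_delta f \<alpha> n \<omega> = (\<Sum>k\<le>n. 2 * f (\<alpha> k \<omega>) - 1)"

definition urn_delta_minus :: "(real \<Rightarrow> real) \<Rightarrow> (nat \<Rightarrow> 'a \<Rightarrow> real) \<Rightarrow> 'a \<Rightarrow> ennreal" where
  "urn_delta_minus f \<alpha> \<omega> = (\<Sum>k. ennreal (max 0 (- (2 * f (\<alpha> k \<omega>) - 1))))"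

definition urn_delta_plus :: "(real \<Rightarrow> real) \<Rightarrow> (nat \<Rightarrow> 'a \<Rightarrow> real) \<Rightarrow> 'a \<Rightarrow> ennreal" where
  "urn_delta_plus f \<alpha> \<omega> = (\<Sum>k. ennreal (max 0 (2 * f (\<alpha> k \<omega>) - 1)))"

end

theory Submission
  imports Defs
begin



lemma bound_aux:
  fixes g g' :: "real \<Rightarrow> real"
  assumes d: "\<forall>y\<in>{0..1}. (g has_real_derivative g' y) (at y within {0..1})"
    and b: "\<forall>y\<in>{0..1}. \<bar>g' y\<bar> \<le> B * \<bar>y - 1/2\<bar> ^ k"
    and B: "B \<ge> 0" and x: "x \<in> {0..1}"
  shows "\<bar>g x - g (1/2)\<bar> \<le> B * \<bar>x - 1/2\<bar> ^ Suc k"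
proof -
  define S where "S = closed_segment (1/2) x"
  have SS: "S \<subseteq> {0..1}" unfolding S_def using x
    by (simp add: closed_segment_eq_real_ivl split: if_splits)
  have "norm (g x - g (1/2)) \<le> (B * \<bar>x - 1/2\<bar> ^ k) * norm (x - 1/2)"
  proof (rule field_differentiable_bound[of S])
    show "convex S" unfolding S_def by simp
    fix z assume z: "z \<in> S"
    show "(g has_field_derivative g' z) (at z within S)"
      using d SS z by (meson DERIV_subset subsetD)
    have "\<bar>z - 1/2\<bar> \<le> \<bar>x - 1/2\<bar>" using z unfolding S_def
      by (auto simp: closed_segment_eq_real_ivl split: if_splits)
    hence "\<bar>z - 1/2\<bar> ^ k \<le> \<bar>x - 1/2\<bar> ^ k" by (simp add: power_mono)
    thus "norm (g' z) \<le> B * \<bar>x - 1/2\<bar> ^ k"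
      using b SS z B by (smt (verit) mult_left_mono real_norm_def subsetD)
  qed (auto simp: S_def)
  thus ?thesis by (simp add: mult.commute mult.left_commute)
qed

lemma taylor2:
  fixes f f1 f2 f3 :: "real \<Rightarrow> real"
  assumes d1: "\<forall>x\<in>{0..1}. (f has_real_derivative f1 x) (at x within {0..1})"
    and d2: "\<forall>x\<in>{0..1}. (f1 has_real_derivative f2 x) (at x within {0..1})"
    and d3: "\<forall>x\<in>{0..1}. (f2 has_real_derivative f3 x) (at x within {0..1})"
    and cont3: "continuous_on {0..1} f3"
    and fixpt: "f (1/2) = 1/2" and deriv_zero: "f1 (1/2) = 0"
  shows "\<exists>M\<ge>0. \<forall>x\<in>{0..1}. \<bar>f x - 1/2 - f2 (1/2) / 2 * (x - 1/2)^2\<bar> \<le> M * \<bar>x - 1/2\<bar>^3"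
proof -
  have "compact (f3 ` {0..1})" by (rule compact_continuous_image[OF cont3]) simp
  then obtain M0 where M0: "\<forall>y\<in>f3 ` {0..1}. norm y \<le> M0"
    using compact_imp_bounded bounded_iff by metis
  define M where "M = max M0 0"
  have M: "M \<ge> 0" "\<forall>y\<in>{0..1}. \<bar>f3 y\<bar> \<le> M" using M0 by (auto simp: M_def)
  define a where "a = f2 (1/2)"
  have s1: "\<forall>y\<in>{0..1}. \<bar>f2 y - a\<bar> \<le> M * \<bar>y - 1/2\<bar> ^ 1"
  proof
    fix y :: real assume y: "y \<in> {0..1}"
    show "\<bar>f2 y - a\<bar> \<le> M * \<bar>y - 1/2\<bar> ^ 1"
      using bound_aux[of f2 f3 M 0 y] d3 M y by (simp add: a_def)
  qed
  have s2: "\<forall>y\<in>{0..1}. \<bar>f1 y - a * (y - 1/2)\<bar> \<le> M * \<bar>y - 1/2\<bar> ^ 2"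
  proof
    fix y :: real assume y: "y \<in> {0..1}"
    have dd: "\<forall>z\<in>{0..1}. ((\<lambda>z. f1 z - a * (z - 1/2)) has_real_derivative f2 z - a) (at z within {0..1})"
    proof
      fix z :: real assume z: "z \<in> {0..1}"
      show "((\<lambda>z. f1 z - a * (z - 1/2)) has_real_derivative f2 z - a) (at z within {0..1})"
        using d2 z by (auto intro!: derivative_eq_intros)
    qed
    show "\<bar>f1 y - a * (y - 1/2)\<bar> \<le> M * \<bar>y - 1/2\<bar> ^ 2"
      using bound_aux[OF dd s1 M(1) y] deriv_zero by (simp add: numeral_2_eq_2)
  qed
  have s3: "\<forall>y\<in>{0..1}. \<bar>f y - 1/2 - a/2 * (y - 1/2)^2\<bar> \<le> M * \<bar>y - 1/2\<bar> ^ 3"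
  proof
    fix y :: real assume y: "y \<in> {0..1}"
    have dd: "\<forall>z\<in>{0..1}. ((\<lambda>z. f z - a/2 * (z - 1/2)^2) has_real_derivative f1 z - a * (z - 1/2)) (at z within {0..1})"
    proof
      fix z :: real assume z: "z \<in> {0..1}"
      show "((\<lambda>z. f z - a/2 * (z - 1/2)^2) has_real_derivative f1 z - a * (z - 1/2)) (at z within {0..1})"
        using d1 z by (auto intro!: derivative_eq_intros)
    qed
    show "\<bar>f y - 1/2 - a/2 * (y - 1/2)^2\<bar> \<le> M * \<bar>y - 1/2\<bar> ^ 3"
      using bound_aux[OF dd s2 M(1) y] fixpt by (simp add: numeral_3_eq_3)
  qed
  thus ?thesis using M(1) unfolding a_def by blast
qed





lemma contraction:
  fixes f :: "real \<Rightarrow> real"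
  assumes cont: "continuous_on {0..1} f"
    and f_range: "\<forall>x\<in>{0..1}. 0 < f x \<and> f x < 1"
    and fix_unique: "\<forall>x\<in>{0..1}. f x = x \<longrightarrow> x = 1/2"
    and T: "\<forall>x\<in>{0..1}. \<bar>f x - 1/2 - a / 2 * (x - 1/2)^2\<bar> \<le> M * \<bar>x - 1/2\<bar>^3"
    and M: "M \<ge> 0"
  shows "\<exists>c \<delta>. 0 < c \<and> 0 < \<delta> \<and>
     (\<forall>x\<in>{0..1}. (x - 1/2) * (x - f x) \<ge> c * (x - 1/2)^2) \<and>
     (\<forall>x\<in>{0..1}. \<bar>x - 1/2\<bar> < \<delta> \<longrightarrow> (x - 1/2) * (x - f x) \<ge> 3/4 * (x - 1/2)^2)"
proof -
  have lt: "f x > x" if x: "x \<in> {0..1}" "x < 1/2" for x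
  proof (rule ccontr)
    assume "\<not> f x > x"
    hence "(\<lambda>t. f t - t) x \<le> 0" by simp
    moreover have "0 \<le> (\<lambda>t. f t - t) 0" using f_range[rule_format, of 0] by auto
    moreover have "continuous_on {0..x} (\<lambda>t. f t - t)"
      using cont x by (auto intro!: continuous_intros elim: continuous_on_subset)
    ultimately obtain t where t: "0 \<le> t" "t \<le> x" "f t - t = 0"
      using IVT2'[of "\<lambda>t. f t - t" x 0 0] x by auto
    hence "t = 1/2" using fix_unique x by auto
    thus False using t x by simp
  qed
  have gt: "f x < x" if x: "x \<in> {0..1}" "x > 1/2" for x
  proof (rule ccontr)
    assume "\<not> f x < x"
    hence "0 \<le> (\<lambda>t. f t - t) x" by simp
    moreover have "(\<lambda>t. f t - t) 1 \<le> 0" using f_range[rule_format, of 1] by auto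
    moreover have "continuous_on {x..1} (\<lambda>t. f t - t)"
      using cont x by (auto intro!: continuous_intros elim: continuous_on_subset)
    ultimately obtain t where t: "x \<le> t" "t \<le> 1" "f t - t = 0"
      using IVT2'[of "\<lambda>t. f t - t" 1 0 x] x by auto
    hence "t = 1/2" using fix_unique x by auto
    thus False using t x by simp
  qed
  define \<delta> where "\<delta> = min (1/4) (1 / (4 * (\<bar>a\<bar>/2 + M) + 1))"
  have \<delta>: "0 < \<delta>" "\<delta> \<le> 1/4" "\<delta> * (\<bar>a\<bar>/2 + M) \<le> 1/4"
  proof -
    show "0 < \<delta>" "\<delta> \<le> 1/4" using M by (auto simp: \<delta>_def)
    define P where "P = \<bar>a\<bar>/2 + M"
    have P: "P \<ge> 0" using M by (simp add: P_def)
    have "\<delta> \<le> 1 / (4 * P + 1)" by (simp add: \<delta>_def P_def)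
    hence "\<delta> * (4 * P + 1) \<le> 1" using P by (simp add: divide_simps)
    moreover have "\<delta> \<ge> 0" using M by (simp add: \<delta>_def)
    ultimately have "4 * (\<delta> * P) \<le> 1" using P by (simp add: algebra_simps)
    hence "\<delta> * P \<le> 1/4" by linarith
    thus "\<delta> * (\<bar>a\<bar>/2 + M) \<le> 1/4" by (simp add: P_def)
  qed
  have near: "(x - 1/2) * (x - f x) \<ge> 3/4 * (x - 1/2)^2" if x: "x \<in> {0..1}" "\<bar>x - 1/2\<bar> < \<delta>" for x
  proof -
    define u where "u = x - 1/2"
    have "\<bar>f x - 1/2\<bar> \<le> \<bar>a\<bar>/2 * u^2 + M * \<bar>u\<bar>^3"
    proof -
      have t: "\<bar>f x - 1/2 - a / 2 * u^2\<bar> \<le> M * \<bar>u\<bar>^3" using T x unfolding u_def by blast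
      have "\<bar>a / 2 * u^2\<bar> = \<bar>a\<bar>/2 * u^2" by (simp add: abs_mult)
      thus ?thesis using t by linarith
    qed
    also have "\<dots> = \<bar>u\<bar> * (\<bar>u\<bar> * (\<bar>a\<bar>/2 + M * \<bar>u\<bar>))"
      by (simp add: power2_eq_square power3_eq_cube algebra_simps)
    also have "\<dots> \<le> \<bar>u\<bar> * (1/4)"
    proof (rule mult_left_mono)
      have "\<bar>u\<bar> * (\<bar>a\<bar>/2 + M * \<bar>u\<bar>) \<le> \<delta> * (\<bar>a\<bar>/2 + M)"
      proof (rule mult_mono)
        show "\<bar>a\<bar>/2 + M * \<bar>u\<bar> \<le> \<bar>a\<bar>/2 + M"
          using x \<delta> M unfolding u_def by (simp add: mult_left_le)
      qed (use x M \<delta> in \<open>auto simp: u_def\<close>)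
      thus "\<bar>u\<bar> * (\<bar>a\<bar>/2 + M * \<bar>u\<bar>) \<le> 1/4" using \<delta> by linarith
    qed simp
    finally have h: "\<bar>f x - 1/2\<bar> \<le> \<bar>u\<bar> / 4" by simp
    have "u * (x - f x) = u^2 - u * (f x - 1/2)" unfolding u_def power2_eq_square by (simp add: field_simps)
    moreover have "u * (f x - 1/2) \<le> \<bar>u\<bar> * \<bar>f x - 1/2\<bar>" by (metis abs_ge_self abs_mult)
    moreover have "\<bar>u\<bar> * \<bar>f x - 1/2\<bar> \<le> \<bar>u\<bar> * (\<bar>u\<bar>/4)" using h by (intro mult_left_mono) auto
    moreover have "\<bar>u\<bar> * (\<bar>u\<bar>/4) = u^2/4" by (simp add: power2_eq_square abs_mult_self_eq)
    ultimately have "3/4 * u^2 \<le> u * (x - f x)" by linarith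
    thus ?thesis unfolding u_def .
  qed
  define K where "K = {0..1/2-\<delta>} \<union> {1/2+\<delta>..1}"
  define g where "g x = (x - f x) / (x - 1/2)" for x
  have Kc: "compact K" unfolding K_def by (intro compact_Un compact_Icc)
  have Kne: "K \<noteq> {}" using \<delta> unfolding K_def by auto
  have KI: "x \<in> {0..1}" "x \<noteq> 1/2" if "x \<in> K" for x using that \<delta> by (auto simp: K_def)
  have gc: "continuous_on K g" unfolding g_def
  proof (intro continuous_on_divide continuous_on_diff continuous_on_id continuous_on_const continuous_on_subset[OF cont])
    show "K \<subseteq> {0..1}" using KI by blast
    show "\<forall>x\<in>K. x - 1/2 \<noteq> 0" using KI by auto
  qed auto
  obtain xm where xm: "xm \<in> K" "\<forall>y\<in>K. g xm \<le> g y"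
    using continuous_attains_inf[OF Kc Kne gc] by blast
  have gpos: "g y > 0" if "y \<in> K" for y
  proof -
    have "y < 1/2 \<or> y > 1/2" using KI[OF that] by linarith
    thus ?thesis
    proof
      assume "y < 1/2" thus ?thesis using lt[of y] KI[OF that] unfolding g_def
        by (intro divide_neg_neg) auto
    next
      assume "y > 1/2" thus ?thesis using gt[of y] KI[OF that] unfolding g_def
        by (intro divide_pos_pos) auto
    qed
  qed
  define c where "c = min (3/4) (g xm)"
  have c: "c > 0" using gpos xm by (simp add: c_def)
  have glob: "(x - 1/2) * (x - f x) \<ge> c * (x - 1/2)^2" if x: "x \<in> {0..1}" for x
  proof (cases "\<bar>x - 1/2\<bar> < \<delta>")
    case True
    have "c * (x - 1/2)^2 \<le> 3/4 * (x - 1/2)^2" by (intro mult_right_mono) (auto simp: c_def)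
    thus ?thesis using near[OF x True] by linarith
  next
    case False
    hence xK: "x \<in> K" using x by (auto simp: K_def)
    have "c \<le> g x" using xm xK unfolding c_def by (meson min.coboundedI2)
    hence "c * (x - 1/2)^2 \<le> g x * (x - 1/2)^2" by (simp add: mult_right_mono)
    also have "\<dots> = (x - 1/2) * (x - f x)"
    proof -
      have "x - 1/2 \<noteq> 0" using KI[OF xK] by simp
      thus ?thesis unfolding g_def power2_eq_square by (simp add: divide_simps)
    qed
    finally show ?thesis .
  qed
  show ?thesis using c \<delta> glob near by blast
qed





lemma pow_expand:
  fixes y h :: real
  shows "\<bar>(y+h)^k - y^k - real k * y^(k-1) * h\<bar> \<le> real k * (real k - 1) / 2 * (\<bar>y\<bar>+\<bar>h\<bar>)^(k-2) * h^2"
proof (induction k)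
  case 0 then show ?case by simp
next
  case (Suc k)
  define E where "E = (y+h)^k - y^k - real k * y^(k-1) * h"
  show ?case
  proof (cases k)
    case 0 then show ?thesis by simp
  next
    case (Suc j)
    have eq: "(y+h)^(Suc k) - y^(Suc k) - real (Suc k) * y^k * h = (y+h) * E + real k * y^(k-1) * h^2"
      unfolding E_def using Suc by (simp add: algebra_simps power2_eq_square)
    have "\<bar>(y+h) * E\<bar> \<le> (\<bar>y\<bar>+\<bar>h\<bar>) * (real k * (real k - 1) / 2 * (\<bar>y\<bar>+\<bar>h\<bar>)^(k-2) * h^2)"
      unfolding abs_mult E_def by (intro mult_mono Suc.IH) (auto simp: abs_triangle_ineq)
    also have "\<dots> = real k * (real k - 1) / 2 * (\<bar>y\<bar>+\<bar>h\<bar>)^(k-1) * h^2"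
    proof (cases j)
      case 0 then show ?thesis using Suc by simp
    next
      case (Suc i)
      have "(\<bar>y\<bar>+\<bar>h\<bar>) * (\<bar>y\<bar>+\<bar>h\<bar>)^(k-2) = (\<bar>y\<bar>+\<bar>h\<bar>)^(k-1)"
        using Suc \<open>k = Suc j\<close> by simp
      moreover have "(\<bar>y\<bar>+\<bar>h\<bar>) * (real k * (real k - 1) / 2 * (\<bar>y\<bar>+\<bar>h\<bar>)^(k-2) * h^2)
          = real k * (real k - 1) / 2 * ((\<bar>y\<bar>+\<bar>h\<bar>) * (\<bar>y\<bar>+\<bar>h\<bar>)^(k-2)) * h^2"
        by (simp only: ac_simps)
      ultimately show ?thesis by simp
    qed
    finally have a1: "\<bar>(y+h) * E\<bar> \<le> real k * (real k - 1) / 2 * (\<bar>y\<bar>+\<bar>h\<bar>)^(k-1) * h^2" .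
    have "\<bar>real k * y^(k-1) * h^2\<bar> = real k * \<bar>y\<bar>^(k-1) * h^2" by (simp add: abs_mult power_abs)
    also have "\<dots> \<le> real k * (\<bar>y\<bar>+\<bar>h\<bar>)^(k-1) * h^2"
      by (intro mult_right_mono mult_left_mono power_mono) auto
    finally have a2: "\<bar>real k * y^(k-1) * h^2\<bar> \<le> real k * (\<bar>y\<bar>+\<bar>h\<bar>)^(k-1) * h^2" .
    have "\<bar>(y+h)^(Suc k) - y^(Suc k) - real (Suc k) * y^(Suc k - 1) * h\<bar>
        = \<bar>(y+h) * E + real k * y^(k-1) * h^2\<bar>" using eq by simp
    also have "\<dots> \<le> \<bar>(y+h) * E\<bar> + \<bar>real k * y^(k-1) * h^2\<bar>" by (rule abs_triangle_ineq)
    also have "\<dots> \<le> real k * (real k - 1) / 2 * (\<bar>y\<bar>+\<bar>h\<bar>)^(k-1) * h^2 + real k * (\<bar>y\<bar>+\<bar>h\<bar>)^(k-1) * h^2"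
      using a1 a2 by linarith
    also have "\<dots> = real (Suc k) * (real (Suc k) - 1) / 2 * (\<bar>y\<bar>+\<bar>h\<bar>)^(Suc k - 2) * h^2"
      using Suc by (simp add: algebra_simps add_divide_distrib)
    finally show ?thesis .
  qed
qed





lemma pow_upper:
  fixes y h r :: real
  assumes "\<bar>h\<bar> \<le> r"
  shows "(y+h)^k \<le> y^k + real k * y^(k-1) * h + real k * (real k - 1) / 2 * (\<bar>y\<bar>+r)^(k-2) * r^2"
proof -
  have C: "real k * (real k - 1) / 2 \<ge> 0" by (cases k) auto
  have P: "(\<bar>y\<bar>+\<bar>h\<bar>)^(k-2) * h^2 \<le> (\<bar>y\<bar>+r)^(k-2) * r^2"
  proof (rule mult_mono)
    show "h^2 \<le> r^2" using assms by (metis abs_ge_zero power2_abs power_mono)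
    show "(\<bar>y\<bar>+\<bar>h\<bar>)^(k-2) \<le> (\<bar>y\<bar>+r)^(k-2)" using assms by (intro power_mono) auto
  qed (use assms abs_ge_zero[of h] in auto)
  have "real k * (real k - 1) / 2 * (\<bar>y\<bar>+\<bar>h\<bar>)^(k-2) * h^2 \<le> real k * (real k - 1) / 2 * (\<bar>y\<bar>+r)^(k-2) * r^2"
    using mult_left_mono[OF P C] by (simp only: mult.assoc)
  moreover have "(y+h)^k - y^k - real k * y^(k-1) * h \<le> \<bar>(y+h)^k - y^k - real k * y^(k-1) * h\<bar>" by (rule abs_ge_self)
  ultimately show ?thesis using pow_expand[of y h k] by linarith
qed

lemma step_pow:
  fixes x F N :: real and k :: nat
  assumes x: "0 \<le> x" "x \<le> 1" and N: "N \<ge> 1" and F: "0 \<le> F" "F \<le> 1"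
  shows "F * (x + (1-x)/N - 1/2)^k + (1-F) * (x - x/N - 1/2)^k
     \<le> (x-1/2)^k - real k * (x-1/2)^(k-1) * (x-F) / N
        + real k * (real k - 1) / 2 * (\<bar>x-1/2\<bar> + 1/N)^(k-2) / N^2"
proof -
  define u where "u = x - 1/2"
  define R where "R = real k * (real k - 1) / 2 * (\<bar>u\<bar> + 1/N)^(k-2) * (1/N)^2"
  have h1: "\<bar>(1-x)/N\<bar> \<le> 1/N" using x N by (auto simp: divide_simps)
  have h2: "\<bar>-x/N\<bar> \<le> 1/N" using x N by (auto simp: divide_simps)
  have e1: "(u + (1-x)/N)^k \<le> u^k + real k * u^(k-1) * ((1-x)/N) + R"
    using pow_upper[OF h1, of u k] unfolding R_def by simp
  have e2: "(u + -x/N)^k \<le> u^k + real k * u^(k-1) * (-x/N) + R"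
    using pow_upper[OF h2, of u k] unfolding R_def by simp
  have "F * (u + (1-x)/N)^k + (1-F) * (u + -x/N)^k
      \<le> F * (u^k + real k * u^(k-1) * ((1-x)/N) + R) + (1-F) * (u^k + real k * u^(k-1) * (-x/N) + R)"
    using e1 e2 F by (intro add_mono mult_left_mono) auto
  also have "\<dots> = u^k + real k * u^(k-1) * ((F*(1-x) - (1-F)*x)/N) + R"
    by (simp add: algebra_simps add_divide_distrib diff_divide_distrib)
  also have "(F*(1-x) - (1-F)*x)/N = - ((x - F)/N)"
  proof -
    have "F*(1-x) - (1-F)*x = - (x - F)" by (simp add: algebra_simps)
    thus ?thesis by (metis minus_divide_left)
  qed
  finally have fin: "F * (u + (1-x)/N)^k + (1-F) * (u + -x/N)^k \<le> u^k + real k * u^(k-1) * (- ((x - F)/N)) + R" .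
  have a: "x + (1-x)/N - 1/2 = u + (1-x)/N" "x - x/N - 1/2 = u + -x/N" by (simp_all add: u_def)
  have b: "real k * u^(k-1) * (- ((x - F)/N)) = - (real k * u^(k-1) * (x-F) / N)" by simp
  have c: "R = real k * (real k - 1) / 2 * (\<bar>u\<bar> + 1/N)^(k-2) / N^2"
    unfolding R_def by (simp add: power_divide)
  show ?thesis using fin unfolding a b c u_def[symmetric] by linarith
qed





definition Vf :: "nat \<Rightarrow> nat \<Rightarrow> real \<Rightarrow> real \<Rightarrow> real" where
  "Vf p m A x = (x - 1/2)^(2*p) + A * (x - 1/2)^(2*m)"

lemma drift_ge:
  fixes u w c \<delta> A :: real
  assumes c: "c > 0" and d: "\<delta> > 0" and u: "\<bar>u\<bar> \<le> 1/2"
    and glob: "w \<ge> c * u^2" and near: "\<bar>u\<bar> < \<delta> \<Longrightarrow> w \<ge> 3/4 * u^2"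
    and p: "1 \<le> p" "p \<le> m" and mc: "real m * c \<ge> 3 * real p / 2"
    and A: "A = (3 * real p / 2) / (real m * c * \<delta>^(2*m))"
  shows "real (2*p) * (u^2)^(p-1) * w + A * (real (2*m) * (u^2)^(m-1) * w)
         \<ge> (3 * real p / 2) * (u^(2*p) + A * u^(2*m))"
proof -
  define s where "s = u^2"
  define \<kappa> where "\<kappa> = 3 * real p / 2"
  have s0: "s \<ge> 0" unfolding s_def by simp
  have "\<bar>u\<bar>^2 \<le> (1/2)^2" using u by (intro power_mono) auto
  hence s1: "s \<le> 1" unfolding s_def by (simp add: power2_eq_square)
  have m0: "m \<ge> 1" using p by simp
  have A0: "A \<ge> 0" using A c d by simp
  have sp: "u^(2*p) = s^p" "u^(2*m) = s^m" unfolding s_def by (simp_all add: power_mult)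
  have spm: "s^(p-1) * s = s^p" "s^(m-1) * s = s^m" using p m0
    by (simp_all add: power_Suc2[symmetric])
  have "c * u^2 \<ge> 0" using c by simp
  hence w0: "w \<ge> 0" using glob by linarith
  show ?thesis
  proof (cases "\<bar>u\<bar> < \<delta>")
    case True
    have wn: "w \<ge> 3/4 * s" using near[OF True] by (simp add: s_def)
    have a1: "real (2*p) * s^(p-1) * w \<ge> real (2*p) * s^(p-1) * (3/4 * s)"
      using wn s0 by (intro mult_left_mono) auto
    have mm: "real (2*m) * s^(m-1) * w \<ge> real (2*m) * s^(m-1) * (3/4 * s)"
      using wn s0 by (intro mult_left_mono) auto
    have a2: "A * (real (2*m) * s^(m-1) * w) \<ge> A * (real (2*m) * s^(m-1) * (3/4 * s))"
      by (rule mult_left_mono[OF mm A0])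
    have a3: "real (2*p) * s^(p-1) * (3/4 * s) = \<kappa> * s^p"
      using spm unfolding \<kappa>_def by (simp add: algebra_simps)
    have a4: "A * (real (2*m) * s^(m-1) * (3/4 * s)) = A * (3 * real m / 2) * s^m"
      using spm by (simp add: algebra_simps)
    have a5: "A * (3 * real m / 2) * s^m \<ge> \<kappa> * (A * s^m)"
    proof -
      have "(3*real p/2) * (A * s^m) \<le> (3*real m/2) * (A * s^m)"
        by (rule mult_right_mono) (use p A0 s0 in auto)
      thus ?thesis unfolding \<kappa>_def by (simp add: mult.commute mult.left_commute)
    qed
    have "\<kappa> * (s^p + A * s^m) = \<kappa> * s^p + \<kappa> * (A * s^m)" by (simp add: distrib_left)
    thus ?thesis unfolding sp s_def[symmetric] \<kappa>_def[symmetric]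
      using a1 a2 a3 a4 a5 by linarith
  next
    case False
    have sd: "s^m \<ge> \<delta>^(2*m)"
    proof -
      have "\<delta> \<le> \<bar>u\<bar>" using False by simp
      hence "\<delta>^2 \<le> \<bar>u\<bar>^2" using d by (intro power_mono) auto
      hence "\<delta>^2 \<le> s" unfolding s_def by simp
      hence "(\<delta>^2)^m \<le> s^m" by (intro power_mono) auto
      thus ?thesis by (simp add: power_mult)
    qed
    have first: "real (2*p) * s^(p-1) * w \<ge> 0" using w0 s0 by simp
    have "A * (real (2*m) * s^(m-1) * w) \<ge> A * (real (2*m) * s^(m-1) * (c * s))"
      using glob s0 A0 unfolding s_def by (intro mult_left_mono) auto
    also have "A * (real (2*m) * s^(m-1) * (c * s)) = 2 * (real m * c * A * s^m)"
      using spm by (simp add: algebra_simps)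
    finally have sec: "A * (real (2*m) * s^(m-1) * w) \<ge> 2 * (real m * c * A * s^m)" .
    have mcpos: "real m * c > 0" using c m0 by simp
    have "real m * c * A * s^m = \<kappa> * (s^m / \<delta>^(2*m))"
      unfolding A \<kappa>_def using mcpos d c m0 by (simp add: field_simps)
    also have "\<dots> \<ge> \<kappa> * 1" using sd d by (intro mult_left_mono) (auto simp: \<kappa>_def)
    finally have t1: "real m * c * A * s^m \<ge> \<kappa>" by simp
    have "s^p \<le> 1" using s0 s1 by (simp add: power_le_one)
    hence "\<kappa> * s^p \<le> \<kappa> * 1" by (intro mult_left_mono) (auto simp: \<kappa>_def)
    hence t2: "real m * c * A * s^m \<ge> \<kappa> * s^p" using t1 by linarith
    have t3: "real m * c * A * s^m \<ge> \<kappa> * (A * s^m)"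
    proof -
      have "\<kappa> * (A * s^m) \<le> (real m * c) * (A * s^m)"
        by (rule mult_right_mono) (use mc A0 s0 in \<open>auto simp: \<kappa>_def\<close>)
      thus ?thesis by (simp add: mult.assoc)
    qed
    show ?thesis unfolding sp s_def[symmetric] \<kappa>_def[symmetric]
      using first sec t2 t3 by (simp add: algebra_simps)
  qed
qed





lemma lyap:
  fixes x F N c \<delta> A :: real
  assumes x: "0 \<le> x" "x \<le> 1" and N: "N \<ge> 1" and F: "0 \<le> F" "F \<le> 1"
    and c: "c > 0" and d: "\<delta> > 0"
    and glob: "(x-1/2)*(x-F) \<ge> c*(x-1/2)^2"
    and near: "\<bar>x-1/2\<bar> < \<delta> \<Longrightarrow> (x-1/2)*(x-F) \<ge> 3/4*(x-1/2)^2"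
    and p: "1 \<le> p" "p \<le> m" and mc: "real m * c \<ge> 3 * real p / 2"
    and A: "A = (3 * real p / 2) / (real m * c * \<delta>^(2*m))"
  shows "F * Vf p m A (x + (1-x)/N) + (1-F) * Vf p m A (x - x/N)
    \<le> Vf p m A x - (3 * real p / 2) * Vf p m A x / N
       + (real p * (2 * real p - 1) * (\<bar>x-1/2\<bar> + 1/N)^(2*p-2)
          + A * (real m * (2 * real m - 1)) * (\<bar>x-1/2\<bar> + 1/N)^(2*m-2)) / N^2"
proof -
  define u where "u = x - 1/2"
  define w where "w = u * (x - F)"
  define \<kappa> where "\<kappa> = 3 * real p / 2"
  have A0: "A \<ge> 0" using A c d p by simp
  have N0: "N > 0" using N by simp
  have u: "\<bar>u\<bar> \<le> 1/2" using x unfolding u_def by (auto simp: abs_if)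
  have step1: "F * (x + (1-x)/N - 1/2)^(2*p) + (1-F) * (x - x/N - 1/2)^(2*p)
     \<le> u^(2*p) - real (2*p) * u^(2*p-1) * (x-F) / N
        + real (2*p) * (real (2*p) - 1) / 2 * (\<bar>u\<bar> + 1/N)^(2*p-2) / N^2"
    using step_pow[OF x N F, of "2*p"] unfolding u_def by simp
  have "F * (x + (1-x)/N - 1/2)^(2*m) + (1-F) * (x - x/N - 1/2)^(2*m)
     \<le> u^(2*m) - real (2*m) * u^(2*m-1) * (x-F) / N
        + real (2*m) * (real (2*m) - 1) / 2 * (\<bar>u\<bar> + 1/N)^(2*m-2) / N^2"
    using step_pow[OF x N F, of "2*m"] unfolding u_def by simp
  hence step2: "A * (F * (x + (1-x)/N - 1/2)^(2*m) + (1-F) * (x - x/N - 1/2)^(2*m))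
     \<le> A * (u^(2*m) - real (2*m) * u^(2*m-1) * (x-F) / N
        + real (2*m) * (real (2*m) - 1) / 2 * (\<bar>u\<bar> + 1/N)^(2*m-2) / N^2)"
    by (rule mult_left_mono) (rule A0)
  have pw: "u^(2*k-1) * (x-F) = (u^2)^(k-1) * w" if "k \<ge> 1" for k
  proof -
    have "2*k-1 = Suc (2*(k-1))" using that by simp
    hence "u^(2*k-1) = (u^2)^(k-1) * u" by (simp add: power_mult)
    thus ?thesis unfolding w_def by simp
  qed
  have dr: "real (2*p) * (u^2)^(p-1) * w + A * (real (2*m) * (u^2)^(m-1) * w)
         \<ge> \<kappa> * (u^(2*p) + A * u^(2*m))"
    unfolding \<kappa>_def
  proof (rule drift_ge[OF c d u _ _ p mc A])
    show "c * u^2 \<le> w" using glob unfolding w_def u_def .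
    show "\<bar>u\<bar> < \<delta> \<Longrightarrow> 3/4 * u^2 \<le> w" using near unfolding w_def u_def .
  qed
  have e1: "real (2*p) * u^(2*p-1) * (x-F) / N = real (2*p) * (u^2)^(p-1) * w / N"
    using pw[of p] p by (simp add: mult.assoc)
  have e2: "real (2*m) * u^(2*m-1) * (x-F) / N = real (2*m) * (u^2)^(m-1) * w / N"
    using pw[of m] p by (simp add: mult.assoc)
  have dr2: "(real (2*p) * (u^2)^(p-1) * w + A * (real (2*m) * (u^2)^(m-1) * w)) / N
         \<ge> \<kappa> * (u^(2*p) + A * u^(2*m)) / N"
    using dr N0 by (simp add: divide_right_mono)
  have LHS: "F * Vf p m A (x + (1-x)/N) + (1-F) * Vf p m A (x - x/N)
     = (F * (x + (1-x)/N - 1/2)^(2*p) + (1-F) * (x - x/N - 1/2)^(2*p))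
       + A * (F * (x + (1-x)/N - 1/2)^(2*m) + (1-F) * (x - x/N - 1/2)^(2*m))"
    unfolding Vf_def by (simp add: algebra_simps)
  have V: "Vf p m A x = u^(2*p) + A * u^(2*m)" unfolding Vf_def u_def ..
  have c1: "real (2*p) * (real (2*p) - 1) / 2 = real p * (2 * real p - 1)" by (simp add: field_simps)
  have c2: "real (2*m) * (real (2*m) - 1) / 2 = real m * (2 * real m - 1)" by (simp add: field_simps)
  define P1 where "P1 = F * (x + (1-x)/N - 1/2)^(2*p) + (1-F) * (x - x/N - 1/2)^(2*p)"
  define Q1 where "Q1 = F * (x + (1-x)/N - 1/2)^(2*m) + (1-F) * (x - x/N - 1/2)^(2*m)"
  define D1 where "D1 = real (2*p) * (u^2)^(p-1) * w"
  define D2 where "D2 = real (2*m) * (u^2)^(m-1) * w"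
  define R1 where "R1 = (\<bar>u\<bar> + 1/N)^(2*p-2)"
  define R2 where "R2 = (\<bar>u\<bar> + 1/N)^(2*m-2)"
  define cp where "cp = real p * (2 * real p - 1)"
  define cm where "cm = real m * (2 * real m - 1)"
  have s1: "P1 \<le> u^(2*p) - D1/N + cp * R1 / N^2"
    using step1[unfolded e1 c1] unfolding P1_def D1_def R1_def cp_def by linarith
  have s2: "A * Q1 \<le> A * u^(2*m) - A * (D2/N) + A * (cm * R2 / N^2)"
    using step2[unfolded e2 c2] unfolding Q1_def D2_def R2_def cm_def by (simp add: right_diff_distrib distrib_left)
  have d3: "D1/N + A * (D2/N) \<ge> \<kappa> * (u^(2*p) + A * u^(2*m)) / N"
    using dr2 unfolding D1_def D2_def by (simp add: add_divide_distrib)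
  have goalR: "(cp * R1 + A * cm * R2) / N^2 = cp * R1 / N^2 + A * (cm * R2 / N^2)"
    by (simp add: add_divide_distrib)
  have "F * Vf p m A (x + (1-x)/N) + (1-F) * Vf p m A (x - x/N) = P1 + A * Q1"
    unfolding LHS P1_def Q1_def ..
  also have "\<dots> \<le> (u^(2*p) + A * u^(2*m)) - \<kappa> * (u^(2*p) + A * u^(2*m)) / N + (cp * R1 + A * cm * R2) / N^2"
    using s1 s2 d3 goalR by linarith
  finally show ?thesis unfolding V \<kappa>_def R1_def R2_def cp_def cm_def u_def by simp
qed





lemma bern_aux:
  fixes N :: real assumes N: "N > 0"
  shows "(1 - real q / N) * (N+1)^q \<le> N^q"
proof -
  have "1 + real q * (- 1/(N+1)) \<le> (1 + (- 1/(N+1)))^q"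
    by (rule Bernoulli_inequality) (use N in \<open>simp add: divide_simps\<close>)
  also have "1 + (- 1/(N+1)) = N/(N+1)" using N by (simp add: field_simps)
  finally have b: "1 - real q / (N+1) \<le> (N/(N+1))^q" by simp
  have "1 - real q / N \<le> 1 - real q / (N+1)"
    using N by (intro diff_left_mono divide_left_mono) auto
  with b have "1 - real q / N \<le> N^q / (N+1)^q" by (simp add: power_divide)
  hence "(1 - real q / N) * (N+1)^q \<le> N^q / (N+1)^q * (N+1)^q"
    using N by (intro mult_right_mono) auto
  thus ?thesis using N by simp
qed

lemma rec_bound:
  fixes X :: "nat \<Rightarrow> real" and N0 \<kappa> K B :: real and q :: nat
  assumes N0: "N0 \<ge> 1" and \<kappa>: "\<kappa> > real q" and K: "K \<ge> 0"
    and X0: "\<And>n. 0 \<le> X n" and XB: "\<And>n. X n \<le> B"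
    and rec: "\<And>n. X (Suc n) \<le> (1 - \<kappa>/(N0 + real n)) * X n + K / (N0 + real n)^(Suc q)"
  shows "\<exists>C. \<forall>n. X n \<le> C / (N0 + real n)^q"
proof -
  have B0: "B \<ge> 0" using X0[of 0] XB[of 0] by linarith
  define C where "C = max (K/(\<kappa> - q)) (B * (N0+\<kappa>+1)^q)"
  have C1: "(\<kappa> - q) * C \<ge> K" using \<kappa> unfolding C_def
    by (metis diff_gt_0_iff_gt max.cobounded1 mult.commute pos_divide_le_eq)
  have C2: "C \<ge> B * (N0+\<kappa>+1)^q" unfolding C_def by simp
  have C0: "C \<ge> 0" using C2 B0 N0 \<kappa> by (smt (verit) of_nat_0_le_iff zero_le_mult_iff zero_le_power)
  have Bbound: "B \<le> C / M^q" if "M > 0" "M \<le> N0+\<kappa>+1" for M :: real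
  proof -
    have "B * M^q \<le> B * (N0+\<kappa>+1)^q"
      using that B0 by (intro mult_left_mono power_mono) auto
    hence "B * M^q \<le> C" using C2 by linarith
    thus ?thesis using that by (simp add: divide_simps)
  qed
  have "X n \<le> C / (N0 + real n)^q" for n
  proof (induction n)
    case 0 show ?case using Bbound[of N0] XB[of 0] N0 \<kappa> by simp
  next
    case (Suc n)
    define N where "N = N0 + real n"
    have N1: "N \<ge> 1" using N0 by (simp add: N_def)
    have NS: "N0 + real (Suc n) = N + 1" by (simp add: N_def)
    show ?case
    proof (cases "N \<le> \<kappa>")
      case True
      thus ?thesis unfolding NS using Bbound[of "N+1"] XB[of "Suc n"] N0 N1 by simp
    next
      case False
      have f: "1 - \<kappa>/N \<ge> 0" using False N1 by (simp add: divide_simps)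
      have "X (Suc n) \<le> (1 - \<kappa>/N) * X n + K / N^(Suc q)" using rec[of n] by (simp add: N_def)
      also have "\<dots> \<le> (1 - \<kappa>/N) * (C / N^q) + K / N^(Suc q)"
        using Suc.IH f by (intro add_right_mono mult_left_mono) (auto simp: N_def)
      also have "\<dots> = C / N^q - (\<kappa> * C - K) / N^(Suc q)"
        using N1 by (simp add: field_simps)
      also have "\<dots> \<le> C / N^q - (real q * C) / N^(Suc q)"
        using C1 N1 by (intro diff_left_mono divide_right_mono) (auto simp: algebra_simps)
      also have "\<dots> = (1 - real q / N) * (N+1)^q * (C / ((N+1)^q * N^q))"
        using N1 by (simp add: field_simps)
      also have "\<dots> \<le> N^q * (C / ((N+1)^q * N^q))"
        using bern_aux[of N q] N1 C0 by (intro mult_right_mono) auto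
      also have "\<dots> = C / (N+1)^q" using N1 by (simp add: field_simps)
      finally show ?thesis unfolding NS .
    qed
  qed
  thus ?thesis by blast
qed





locale urn_loc =
  fixes M :: "'a measure" and f :: "real \<Rightarrow> real" and \<alpha> l :: "nat \<Rightarrow> 'a \<Rightarrow> real"
    and a0 l0 :: real
  assumes ps: "prob_space M"
    and meas: "\<And>n. \<alpha> n \<in> borel_measurable M"
    and a0: "0 \<le> a0" "a0 \<le> 1" and l0: "0 < l0"
    and init: "\<And>\<omega>. \<omega> \<in> space M \<Longrightarrow> \<alpha> 0 \<omega> = a0 \<and> l 0 \<omega> = l0"
    and lstep: "\<And>n \<omega>. \<omega> \<in> space M \<Longrightarrow> l (Suc n) \<omega> = l n \<omega> + 1"
    and astep: "\<And>n \<omega>. \<omega> \<in> space M \<Longrightarrow> \<alpha> (Suc n) \<omega> = urn_up (\<alpha> n \<omega>) (l n \<omega>) \<or>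
                         \<alpha> (Suc n) \<omega> = urn_down (\<alpha> n \<omega>) (l n \<omega>)"
    and markov: "\<And>n (B :: nat \<Rightarrow> real set). (\<forall>i. B i \<in> sets borel) \<Longrightarrow>
        measure M {\<omega> \<in> space M. (\<forall>i\<le>n. \<alpha> i \<omega> \<in> B i) \<and>
                                 \<alpha> (Suc n) \<omega> = urn_up (\<alpha> n \<omega>) (l n \<omega>)}
        = (\<integral>\<omega>. indicator {\<omega> \<in> space M. \<forall>i\<le>n. \<alpha> i \<omega> \<in> B i} \<omega> * f (\<alpha> n \<omega>) \<partial>M)"
begin

interpretation P: prob_space M by (rule ps)

lemma em_fin: "emeasure M A < top"
  using P.emeasure_finite[of A] top.not_eq_extremum by blast

definition L :: "nat \<Rightarrow> real" where "L n = l0 + real n"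

lemma L_pos: "L n > 0" using l0 by (simp add: L_def)

lemma l_eq: "\<omega> \<in> space M \<Longrightarrow> l n \<omega> = L n"
  by (induction n) (auto simp: init lstep L_def)

fun S :: "nat \<Rightarrow> real set" where
  "S 0 = {a0}"
| "S (Suc n) = (\<lambda>s. urn_up s (L n)) ` S n \<union> (\<lambda>s. urn_down s (L n)) ` S n"

lemma S_fin: "finite (S n)" by (induction n) auto

lemma up_range: "0 \<le> s \<Longrightarrow> s \<le> 1 \<Longrightarrow> 0 < L' \<Longrightarrow> 0 \<le> urn_up s L' \<and> urn_up s L' \<le> 1"
proof -
  assume a: "0 \<le> s" "s \<le> 1" "0 < L'"
  have "L' * s \<le> L'" using a by (simp add: mult_left_le)
  have "L' * s + 1 \<le> L' + 1" using \<open>L' * s \<le> L'\<close> by linarith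
  have "0 \<le> L' * s + 1" using a by simp
  show ?thesis unfolding urn_up_def using a \<open>L' * s + 1 \<le> L' + 1\<close> \<open>0 \<le> L' * s + 1\<close> by (simp add: divide_simps)
qed

lemma down_range: "0 \<le> s \<Longrightarrow> s \<le> 1 \<Longrightarrow> 0 < L' \<Longrightarrow> 0 \<le> urn_down s L' \<and> urn_down s L' \<le> 1"
proof -
  assume a: "0 \<le> s" "s \<le> 1" "0 < L'"
  have "L' * s \<le> L'" using a by (simp add: mult_left_le)
  have "L' * s \<le> L' + 1" using \<open>L' * s \<le> L'\<close> by linarith
  have "0 \<le> L' * s" using a by simp
  show ?thesis unfolding urn_down_def using a \<open>L' * s \<le> L' + 1\<close> \<open>0 \<le> L' * s\<close> by (simp add: divide_simps)
qed

lemma S_sub: "S n \<subseteq> {0..1}"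
proof (induction n)
  case 0 then show ?case using a0 by simp
next
  case (Suc n)
  show ?case
  proof
    fix x assume "x \<in> S (Suc n)"
    then obtain t where t: "t \<in> S n" "x = urn_up t (L n) \<or> x = urn_down t (L n)" by auto
    have "0 \<le> t" "t \<le> 1" using t(1) Suc.IH by auto
    thus "x \<in> {0..1}" using t(2) up_range[of t "L n"] down_range[of t "L n"] L_pos[of n] by auto
  qed
qed

lemma alpha_S: "\<omega> \<in> space M \<Longrightarrow> \<alpha> n \<omega> \<in> S n"
proof (induction n)
  case 0 then show ?case using init by simp
next
  case (Suc n)
  have "\<alpha> n \<omega> \<in> S n" by (rule Suc.IH[OF Suc.prems])
  moreover have "\<alpha> (Suc n) \<omega> = urn_up (\<alpha> n \<omega>) (L n) \<or> \<alpha> (Suc n) \<omega> = urn_down (\<alpha> n \<omega>) (L n)"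
    using astep[OF Suc.prems, of n] l_eq[OF Suc.prems, of n] by simp
  ultimately show ?case by auto
qed

lemma alpha_01: "\<omega> \<in> space M \<Longrightarrow> 0 \<le> \<alpha> n \<omega> \<and> \<alpha> n \<omega> \<le> 1"
proof -
  assume "\<omega> \<in> space M"
  hence "\<alpha> n \<omega> \<in> {0..1}" using alpha_S S_sub by blast
  thus ?thesis by simp
qed

definition ev :: "nat \<Rightarrow> real \<Rightarrow> 'a set" where
  "ev n s = {\<omega> \<in> space M. \<alpha> n \<omega> = s}"

lemma ev_sets: "ev n s \<in> sets M"
  unfolding ev_def using meas[of n] by measurable

lemma fun_rep: fixes h :: "real \<Rightarrow> real" shows "\<omega> \<in> space M \<Longrightarrow> h (\<alpha> n \<omega>) = (\<Sum>s\<in>S n. h s * indicator (ev n s) \<omega>)"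
proof -
  assume w: "\<omega> \<in> space M"
  have "(\<Sum>s\<in>S n. h s * indicator (ev n s) \<omega>) = (\<Sum>s\<in>S n. if s = \<alpha> n \<omega> then h s else 0)"
    by (intro sum.cong) (auto simp: ev_def w indicator_def)
  also have "\<dots> = h (\<alpha> n \<omega>)" using alpha_S[OF w] S_fin by simp
  finally show ?thesis by simp
qed

lemma meas_h: fixes h :: "real \<Rightarrow> real" shows "(\<lambda>\<omega>. h (\<alpha> n \<omega>)) \<in> borel_measurable M"
proof -
  have "(\<lambda>\<omega>. \<Sum>s\<in>S n. h s * indicator (ev n s) \<omega>) \<in> borel_measurable M"
    using ev_sets by (intro borel_measurable_sum borel_measurable_times borel_measurable_const borel_measurable_indicator)
  thus ?thesis by (rule measurable_cong[THEN iffD1, rotated]) (simp add: fun_rep)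
qed

lemma int_h: fixes h :: "real \<Rightarrow> real" shows "integrable M (\<lambda>\<omega>. h (\<alpha> n \<omega>))"
proof -
  have "integrable M (\<lambda>\<omega>. \<Sum>s\<in>S n. h s * indicator (ev n s) \<omega>)"
    using ev_sets by (intro Bochner_Integration.integrable_sum integrable_mult_right integrable_real_indicator) (auto simp: em_fin)
  thus ?thesis by (rule Bochner_Integration.integrable_cong[OF refl, THEN iffD1, rotated]) (simp add: fun_rep[of _ h n])
qed

definition U :: "nat \<Rightarrow> 'a set" where
  "U n = {\<omega> \<in> space M. \<alpha> (Suc n) \<omega> = urn_up (\<alpha> n \<omega>) (L n)}"

lemma U_sets: "U n \<in> sets M"
  unfolding U_def urn_up_def using meas[of n] meas[of "Suc n"] by measurable

lemma int_hU: fixes h :: "real \<Rightarrow> real" shows "integrable M (\<lambda>\<omega>. h (\<alpha> n \<omega>) * indicator (U n) \<omega>)"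
proof -
  have "integrable M (\<lambda>\<omega>. \<Sum>s\<in>S n. h s * indicator (ev n s \<inter> U n) \<omega>)"
    using ev_sets U_sets by (intro Bochner_Integration.integrable_sum integrable_mult_right integrable_real_indicator) (auto simp: em_fin)
  moreover have "(\<Sum>s\<in>S n. h s * indicator (ev n s \<inter> U n) \<omega>) = h (\<alpha> n \<omega>) * indicator (U n) \<omega>"
    if "\<omega> \<in> space M" for \<omega>
    using fun_rep[OF that, of h n] by (simp add: sum_distrib_right indicator_inter_arith mult.assoc)
  ultimately show ?thesis by (rule Bochner_Integration.integrable_cong[OF refl, THEN iffD1, rotated]) simp
qed

lemma markov_s: "measure M (ev n s \<inter> U n) = f s * measure M (ev n s)"
proof -
  define B where "B = (\<lambda>i::nat. if i = n then {s} else (UNIV :: real set))"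
  have B: "\<forall>i. B i \<in> sets borel" by (simp add: B_def)
  have e1: "{\<omega> \<in> space M. (\<forall>i\<le>n. \<alpha> i \<omega> \<in> B i) \<and> \<alpha> (Suc n) \<omega> = urn_up (\<alpha> n \<omega>) (l n \<omega>)} = ev n s \<inter> U n"
    by (auto simp: B_def ev_def U_def l_eq)
  have e2: "{\<omega> \<in> space M. \<forall>i\<le>n. \<alpha> i \<omega> \<in> B i} = ev n s"
    by (auto simp: B_def ev_def)
  have "measure M (ev n s \<inter> U n) = (\<integral>\<omega>. indicator (ev n s) \<omega> * f (\<alpha> n \<omega>) \<partial>M)"
    using markov[where B=B and n=n, OF B] unfolding e1 e2 .
  also have "\<dots> = (\<integral>\<omega>. f s * indicator (ev n s) \<omega> \<partial>M)"
    by (intro Bochner_Integration.integral_cong) (auto simp: indicator_def ev_def)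
  also have "\<dots> = f s * measure M (ev n s)" using ev_sets[of n s] by simp
  finally show ?thesis .
qed

lemma key: fixes h :: "real \<Rightarrow> real" shows "(\<integral>\<omega>. h (\<alpha> n \<omega>) * indicator (U n) \<omega> \<partial>M) = (\<integral>\<omega>. h (\<alpha> n \<omega>) * f (\<alpha> n \<omega>) \<partial>M)"
proof -
  have "(\<integral>\<omega>. h (\<alpha> n \<omega>) * indicator (U n) \<omega> \<partial>M) = (\<integral>\<omega>. (\<Sum>s\<in>S n. h s * indicator (ev n s \<inter> U n) \<omega>) \<partial>M)"
    by (intro Bochner_Integration.integral_cong refl)
       (simp add: fun_rep[of _ h n] sum_distrib_right indicator_inter_arith mult.assoc)
  also have "\<dots> = (\<Sum>s\<in>S n. h s * measure M (ev n s \<inter> U n))"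
    using ev_sets U_sets by (subst Bochner_Integration.integral_sum) (auto intro!: integrable_real_indicator simp: Int_absorb2 sets.sets_into_space em_fin)
  also have "\<dots> = (\<Sum>s\<in>S n. (h s * f s) * measure M (ev n s))"
    by (simp add: markov_s mult.assoc)
  also have "\<dots> = (\<integral>\<omega>. (\<Sum>s\<in>S n. (h s * f s) * indicator (ev n s) \<omega>) \<partial>M)"
    using ev_sets by (subst Bochner_Integration.integral_sum) (auto intro!: integrable_real_indicator simp: em_fin)
  also have "\<dots> = (\<integral>\<omega>. h (\<alpha> n \<omega>) * f (\<alpha> n \<omega>) \<partial>M)"
    by (intro Bochner_Integration.integral_cong refl) (simp add: fun_rep[of _ "\<lambda>x. h x * f x" n])
  finally show ?thesis .
qed

lemma not_U: "\<omega> \<in> space M \<Longrightarrow> \<omega> \<notin> U n \<Longrightarrow> \<alpha> (Suc n) \<omega> = urn_down (\<alpha> n \<omega>) (L n)"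
  using astep[of \<omega> n] l_eq[of \<omega> n] unfolding U_def by auto

lemma recur: fixes g :: "real \<Rightarrow> real" shows
  "(\<integral>\<omega>. g (\<alpha> (Suc n) \<omega>) \<partial>M) =
   (\<integral>\<omega>. f (\<alpha> n \<omega>) * g (urn_up (\<alpha> n \<omega>) (L n)) + (1 - f (\<alpha> n \<omega>)) * g (urn_down (\<alpha> n \<omega>) (L n)) \<partial>M)"
proof -
  define Gu where "Gu x = g (urn_up x (L n))" for x
  define Gd where "Gd x = g (urn_down x (L n))" for x
  have pw: "g (\<alpha> (Suc n) \<omega>) = (Gu (\<alpha> n \<omega>) * indicator (U n) \<omega> + Gd (\<alpha> n \<omega>)) - Gd (\<alpha> n \<omega>) * indicator (U n) \<omega>"
    if w: "\<omega> \<in> space M" for \<omega>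
  proof (cases "\<omega> \<in> U n")
    case True then show ?thesis by (simp add: Gu_def U_def)
  next
    case False then show ?thesis using not_U[OF w False] by (simp add: Gd_def)
  qed
  have "(\<integral>\<omega>. g (\<alpha> (Suc n) \<omega>) \<partial>M) = (\<integral>\<omega>. (Gu (\<alpha> n \<omega>) * indicator (U n) \<omega> + Gd (\<alpha> n \<omega>)) - Gd (\<alpha> n \<omega>) * indicator (U n) \<omega> \<partial>M)"
    by (intro Bochner_Integration.integral_cong refl pw)
  also have "\<dots> = ((\<integral>\<omega>. Gu (\<alpha> n \<omega>) * indicator (U n) \<omega> \<partial>M) + (\<integral>\<omega>. Gd (\<alpha> n \<omega>) \<partial>M)) - (\<integral>\<omega>. Gd (\<alpha> n \<omega>) * indicator (U n) \<omega> \<partial>M)"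
    using int_hU[of Gu n] int_h[of Gd n] int_hU[of Gd n]
    by (simp add: Bochner_Integration.integral_add Bochner_Integration.integral_diff)
  also have "\<dots> = ((\<integral>\<omega>. Gu (\<alpha> n \<omega>) * f (\<alpha> n \<omega>) \<partial>M) + (\<integral>\<omega>. Gd (\<alpha> n \<omega>) \<partial>M)) - (\<integral>\<omega>. Gd (\<alpha> n \<omega>) * f (\<alpha> n \<omega>) \<partial>M)"
    by (simp only: key)
  also have "\<dots> = (\<integral>\<omega>. (Gu (\<alpha> n \<omega>) * f (\<alpha> n \<omega>) + Gd (\<alpha> n \<omega>)) - Gd (\<alpha> n \<omega>) * f (\<alpha> n \<omega>) \<partial>M)"
    using int_h[of "\<lambda>x. Gu x * f x" n] int_h[of Gd n] int_h[of "\<lambda>x. Gd x * f x" n]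
    by (simp add: Bochner_Integration.integral_add Bochner_Integration.integral_diff)
  also have "\<dots> = (\<integral>\<omega>. f (\<alpha> n \<omega>) * g (urn_up (\<alpha> n \<omega>) (L n)) + (1 - f (\<alpha> n \<omega>)) * g (urn_down (\<alpha> n \<omega>) (L n)) \<partial>M)"
    by (intro Bochner_Integration.integral_cong refl) (simp add: Gu_def Gd_def algebra_simps)
  finally show ?thesis .
qed

definition E :: "nat \<Rightarrow> (real \<Rightarrow> real) \<Rightarrow> real" where
  "E n g = (\<integral>\<omega>. g (\<alpha> n \<omega>) \<partial>M)"

lemma E_mono: "(\<And>x. 0 \<le> x \<Longrightarrow> x \<le> 1 \<Longrightarrow> g x \<le> h x) \<Longrightarrow> E n g \<le> E n h"
  unfolding E_def using alpha_01 by (intro integral_mono int_h) auto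

lemma E_lin: "E n (\<lambda>x. a * g x + b * h x) = a * E n g + b * E n h"
  unfolding E_def using int_h[of g n] int_h[of h n] by simp

lemma E_const: "E n (\<lambda>x. a) = a"
  unfolding E_def by (simp add: P.prob_space)

lemma E_nonneg: "(\<And>x. 0 \<le> x \<Longrightarrow> x \<le> 1 \<Longrightarrow> 0 \<le> g x) \<Longrightarrow> 0 \<le> E n g"
  using E_mono[of "\<lambda>x. 0" g n] E_const[of n 0] by simp

lemma E_step: "E (Suc n) g = E n (\<lambda>x. f x * g (x + (1-x)/(L n + 1)) + (1 - f x) * g (x - x/(L n + 1)))"
proof -
  have u: "urn_up x (L n) = x + (1-x)/(L n + 1)" for x
    using L_pos[of n] unfolding urn_up_def by (simp add: field_simps)
  have d: "urn_down x (L n) = x - x/(L n + 1)" for x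
    using L_pos[of n] unfolding urn_down_def by (simp add: field_simps)
  show ?thesis unfolding E_def recur u d ..
qed

lemma E_nn: "(\<And>x. 0 \<le> x \<Longrightarrow> x \<le> 1 \<Longrightarrow> 0 \<le> g x) \<Longrightarrow>
   (\<integral>\<^sup>+\<omega>. ennreal (g (\<alpha> n \<omega>)) \<partial>M) = ennreal (E n g)"
  unfolding E_def using alpha_01 by (intro nn_integral_eq_integral int_h) (auto intro!: AE_I2)

lemma meas_en: "(\<lambda>\<omega>. ennreal (g (\<alpha> n \<omega>))) \<in> borel_measurable M"
  using meas_h[of g n] by measurable

end




context urn_loc begin

lemma Vf_nonneg: "A \<ge> 0 \<Longrightarrow> Vf p m A x \<ge> 0"
  unfolding Vf_def by (simp add: power_mult)

lemma Vf_le: assumes "A \<ge> 0" "0 \<le> x" "x \<le> 1" shows "Vf p m A x \<le> 1 + A"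
proof -
  have u: "\<bar>x - 1/2\<bar> \<le> 1" using assms by auto
  have pw: "(x-1/2)^k \<le> 1" for k
  proof -
    have "\<bar>x-1/2\<bar>^k \<le> 1" by (rule power_le_one) (use u in auto)
    moreover have "(x-1/2)^k \<le> \<bar>x-1/2\<bar>^k" by (metis abs_ge_self power_abs)
    ultimately show ?thesis by linarith
  qed
  have "(x-1/2)^(2*p) \<le> 1" by (rule pw)
  moreover have "(x-1/2)^(2*m) \<le> 1" by (rule pw)
  hence "A * (x-1/2)^(2*m) \<le> A" using assms(1) by (simp add: mult_left_le)
  ultimately show ?thesis unfolding Vf_def by linarith
qed

lemma moment_step:
  assumes fr: "\<forall>x\<in>{0..1}. 0 \<le> f x \<and> f x \<le> 1"
    and c: "c > 0" and d: "\<delta> > 0"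
    and glob: "\<forall>x\<in>{0..1}. (x-1/2)*(x - f x) \<ge> c*(x-1/2)^2"
    and near: "\<forall>x\<in>{0..1}. \<bar>x-1/2\<bar> < \<delta> \<longrightarrow> (x-1/2)*(x - f x) \<ge> 3/4*(x-1/2)^2"
    and p: "1 \<le> p" "p \<le> m" and mc: "real m * c \<ge> 3 * real p / 2"
    and A: "A = (3 * real p / 2) / (real m * c * \<delta>^(2*m))"
  shows "E (Suc n) (Vf p m A) \<le> (1 - (3 * real p / 2) / (L n + 1)) * E n (Vf p m A)
      + (1 / (L n + 1)^2) * E n (\<lambda>x. real p * (2 * real p - 1) * (\<bar>x-1/2\<bar> + 1/(L n + 1))^(2*p-2)
          + A * (real m * (2 * real m - 1)) * (\<bar>x-1/2\<bar> + 1/(L n + 1))^(2*m-2))"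
proof -
  define N where "N = L n + 1"
  have N: "N \<ge> 1" using L_pos[of n] by (simp add: N_def)
  define nz where "nz x = real p * (2 * real p - 1) * (\<bar>x-1/2\<bar> + 1/N)^(2*p-2)
          + A * (real m * (2 * real m - 1)) * (\<bar>x-1/2\<bar> + 1/N)^(2*m-2)" for x
  have "E (Suc n) (Vf p m A) = E n (\<lambda>x. f x * Vf p m A (x + (1-x)/N) + (1 - f x) * Vf p m A (x - x/N))"
    unfolding E_step N_def ..
  also have "\<dots> \<le> E n (\<lambda>x. (1 - (3 * real p / 2) / N) * Vf p m A x + (1 / N^2) * nz x)"
  proof (rule E_mono)
    fix x :: real assume x: "0 \<le> x" "x \<le> 1"
    have "f x * Vf p m A (x + (1-x)/N) + (1 - f x) * Vf p m A (x - x/N)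
      \<le> Vf p m A x - (3 * real p / 2) * Vf p m A x / N + nz x / N^2"
      unfolding nz_def
      by (rule lyap[OF x N _ _ c d _ _ p mc A]) (use fr glob near x in auto)
    also have "\<dots> = (1 - (3 * real p / 2) / N) * Vf p m A x + (1 / N^2) * nz x"
      by (simp add: algebra_simps)
    finally show "f x * Vf p m A (x + (1-x)/N) + (1 - f x) * Vf p m A (x - x/N)
      \<le> (1 - (3 * real p / 2) / N) * Vf p m A x + (1 / N^2) * nz x" .
  qed
  also have "\<dots> = (1 - (3 * real p / 2) / N) * E n (Vf p m A) + (1 / N^2) * E n nz"
    by (rule E_lin)
  finally show ?thesis unfolding N_def nz_def .
qed

lemma moments:
  assumes fr: "\<forall>x\<in>{0..1}. 0 \<le> f x \<and> f x \<le> 1"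
    and c: "c > 0" and d: "\<delta> > 0"
    and glob: "\<forall>x\<in>{0..1}. (x-1/2)*(x - f x) \<ge> c*(x-1/2)^2"
    and near: "\<forall>x\<in>{0..1}. \<bar>x-1/2\<bar> < \<delta> \<longrightarrow> (x-1/2)*(x - f x) \<ge> 3/4*(x-1/2)^2"
  shows "\<exists>C1 C2. \<forall>n. E n (\<lambda>x. (x-1/2)^2) \<le> C1 / (L n + 1) \<and> E n (\<lambda>x. (x-1/2)^4) \<le> C2 / (L n + 1)^2"
proof -
  define m where "m = nat \<lceil>3/c\<rceil> + 2"
  have m2: "m \<ge> 2" by (simp add: m_def)
  have "real m \<ge> 3/c" unfolding m_def by linarith
  hence mc0: "real m * c \<ge> 3" using c by (simp add: field_simps)
  define A1 where "A1 = (3 * real (1::nat) / 2) / (real m * c * \<delta>^(2*m))"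
  define A2 where "A2 = (3 * real (2::nat) / 2) / (real m * c * \<delta>^(2*m))"
  have A1: "A1 \<ge> 0" and A2: "A2 \<ge> 0" using c d m2 by (simp_all add: A1_def A2_def)
  define N0 where "N0 = l0 + 1"
  have N0: "N0 \<ge> 1" using l0 by (simp add: N0_def)
  have LN: "L n + 1 = N0 + real n" for n by (simp add: L_def N0_def)
  have Nge: "L n + 1 \<ge> 1" for n using L_pos[of n] by simp
  have base: "\<bar>x-1/2\<bar> + 1/(L n + 1) \<le> 2" "0 \<le> \<bar>x-1/2\<bar> + 1/(L n + 1)"
    if "0 \<le> x" "x \<le> 1" for x n
  proof -
    have "1/(L n + 1) \<le> 1" using Nge[of n] by simp
    moreover have "\<bar>x-1/2\<bar> \<le> 1" using that by auto
    ultimately show "\<bar>x-1/2\<bar> + 1/(L n + 1) \<le> 2" by linarith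
    show "0 \<le> \<bar>x-1/2\<bar> + 1/(L n + 1)" using Nge[of n] by simp
  qed
  have cm0: "real m * (2 * real m - 1) \<ge> 0" using m2 by simp
  define X1 where "X1 n = E n (Vf 1 m A1)" for n
  define K1 where "K1 = 1 + A1 * (real m * (2 * real m - 1)) * 2^(2*m-2)"
  have rec1: "X1 (Suc n) \<le> (1 - (3/2) / (N0 + real n)) * X1 n + K1 / (N0 + real n)^(Suc 1)" for n
  proof -
    have st: "X1 (Suc n) \<le> (1 - (3 * real (1::nat) / 2) / (L n + 1)) * X1 n
      + (1 / (L n + 1)^2) * E n (\<lambda>x. real (1::nat) * (2 * real (1::nat) - 1) * (\<bar>x-1/2\<bar> + 1/(L n + 1))^(2*1-2)
          + A1 * (real m * (2 * real m - 1)) * (\<bar>x-1/2\<bar> + 1/(L n + 1))^(2*m-2))"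
      unfolding X1_def by (rule moment_step[OF fr c d glob near _ _ _ A1_def]) (use mc0 m2 in auto)
    have "E n (\<lambda>x. real (1::nat) * (2 * real (1::nat) - 1) * (\<bar>x-1/2\<bar> + 1/(L n + 1))^(2*1-2)
          + A1 * (real m * (2 * real m - 1)) * (\<bar>x-1/2\<bar> + 1/(L n + 1))^(2*m-2)) \<le> E n (\<lambda>x. K1)"
    proof (rule E_mono)
      fix x :: real assume x: "0 \<le> x" "x \<le> 1"
      have "(\<bar>x-1/2\<bar> + 1/(L n + 1))^(2*m-2) \<le> 2^(2*m-2)"
        using base[OF x] by (intro power_mono) auto
      hence "A1 * (real m * (2 * real m - 1)) * (\<bar>x-1/2\<bar> + 1/(L n + 1))^(2*m-2) \<le> A1 * (real m * (2 * real m - 1)) * 2^(2*m-2)"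
        using A1 cm0 by (intro mult_left_mono) auto
      thus "real (1::nat) * (2 * real (1::nat) - 1) * (\<bar>x-1/2\<bar> + 1/(L n + 1))^(2*1-2)
          + A1 * (real m * (2 * real m - 1)) * (\<bar>x-1/2\<bar> + 1/(L n + 1))^(2*m-2) \<le> K1"
        unfolding K1_def by simp
    qed
    hence "(1 / (L n + 1)^2) * E n (\<lambda>x. real (1::nat) * (2 * real (1::nat) - 1) * (\<bar>x-1/2\<bar> + 1/(L n + 1))^(2*1-2)
          + A1 * (real m * (2 * real m - 1)) * (\<bar>x-1/2\<bar> + 1/(L n + 1))^(2*m-2)) \<le> (1 / (L n + 1)^2) * K1"
      unfolding E_const by (intro mult_left_mono) auto
    with st show ?thesis unfolding LN by (simp add: power2_eq_square)
  qed
  obtain C1 where C1: "\<forall>n. X1 n \<le> C1 / (N0 + real n)^1"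
  proof -
    have "\<exists>C. \<forall>n. X1 n \<le> C / (N0 + real n)^1"
    proof (rule rec_bound[OF N0 _ _ _ _ rec1])
      show "3/2 > real (1::nat)" by simp
      show "K1 \<ge> 0" unfolding K1_def using A1 cm0 by simp
      show "0 \<le> X1 n" for n unfolding X1_def by (rule E_nonneg) (rule Vf_nonneg[OF A1])
      show "X1 n \<le> 1 + A1" for n unfolding X1_def
        using E_mono[of "Vf 1 m A1" "\<lambda>x. 1 + A1" n] Vf_le[OF A1] E_const by simp
    qed
    thus ?thesis using that by blast
  qed
  have m1: "E n (\<lambda>x. (x-1/2)^2) \<le> C1 / (L n + 1)" for n
  proof -
    have "E n (\<lambda>x. (x-1/2)^2) \<le> X1 n" unfolding X1_def
      by (rule E_mono) (use A1 in \<open>simp add: Vf_def power_mult\<close>)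
    moreover have "X1 n \<le> C1 / (N0 + real n)" using C1 by simp
    ultimately show ?thesis unfolding LN by linarith
  qed
  have C1pos: "C1 \<ge> 0"
  proof -
    have "0 \<le> E 0 (\<lambda>x. (x-1/2)^2)" by (rule E_nonneg) simp
    hence "0 \<le> C1 / (L 0 + 1)" using m1[of 0] by linarith
    thus ?thesis using Nge[of 0] by (simp add: zero_le_divide_iff)
  qed
  define X2 where "X2 n = E n (Vf 2 m A2)" for n
  define K2 where "K2 = 6 + A2 * (real m * (2 * real m - 1)) * 2^(2*m-4)"
  have K2: "K2 \<ge> 0" unfolding K2_def using A2 cm0 by simp
  have rec2: "X2 (Suc n) \<le> (1 - 3 / (N0 + real n)) * X2 n + (K2 * (2 * C1 + 2)) / (N0 + real n)^(Suc 2)" for n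
  proof -
    define N where "N = L n + 1"
    have N1: "N \<ge> 1" using Nge[of n] by (simp add: N_def)
    have st: "X2 (Suc n) \<le> (1 - (3 * real (2::nat) / 2) / N) * X2 n
      + (1 / N^2) * E n (\<lambda>x. real (2::nat) * (2 * real (2::nat) - 1) * (\<bar>x-1/2\<bar> + 1/N)^(2*2-2)
          + A2 * (real m * (2 * real m - 1)) * (\<bar>x-1/2\<bar> + 1/N)^(2*m-2))"
      unfolding X2_def N_def by (rule moment_step[OF fr c d glob near _ _ _ A2_def]) (use mc0 m2 in auto)
    have "E n (\<lambda>x. real (2::nat) * (2 * real (2::nat) - 1) * (\<bar>x-1/2\<bar> + 1/N)^(2*2-2)
          + A2 * (real m * (2 * real m - 1)) * (\<bar>x-1/2\<bar> + 1/N)^(2*m-2))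
        \<le> E n (\<lambda>x. (2 * K2) * (x-1/2)^2 + (2 * K2 / N^2) * 1)"
    proof (rule E_mono)
      fix x :: real assume x: "0 \<le> x" "x \<le> 1"
      define b where "b = \<bar>x-1/2\<bar> + 1/N"
      have b: "0 \<le> b" "b \<le> 2" using base[OF x, of n] unfolding b_def N_def by auto
      have e: "2*m-2 = 2 + (2*m-4)" using m2 by simp
      have "b^(2*m-2) = b^2 * b^(2*m-4)" unfolding e by (rule power_add)
      also have "\<dots> \<le> b^2 * 2^(2*m-4)" using b by (intro mult_left_mono power_mono) auto
      finally have "A2 * (real m * (2 * real m - 1)) * b^(2*m-2) \<le> A2 * (real m * (2 * real m - 1)) * (b^2 * 2^(2*m-4))"
        using A2 cm0 by (intro mult_left_mono) auto
      hence t: "real (2::nat) * (2 * real (2::nat) - 1) * b^(2*2-2) + A2 * (real m * (2 * real m - 1)) * b^(2*m-2) \<le> K2 * b^2"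
        unfolding K2_def by (simp add: algebra_simps)
      have "b^2 \<le> 2 * (x-1/2)^2 + 2 / N^2"
      proof -
        have "b^2 = \<bar>x-1/2\<bar>^2 + 2 * \<bar>x-1/2\<bar> * (1/N) + (1/N)^2" unfolding b_def by (simp add: power2_sum)
        moreover have "2 * \<bar>x-1/2\<bar> * (1/N) \<le> \<bar>x-1/2\<bar>^2 + (1/N)^2"
          using sum_squares_bound[of "\<bar>x-1/2\<bar>" "1/N"] by (simp add: power2_eq_square)
        ultimately show ?thesis by (simp add: power_divide)
      qed
      hence "K2 * b^2 \<le> K2 * (2 * (x-1/2)^2 + 2 / N^2)" using K2 by (intro mult_left_mono) auto
      with t show "real (2::nat) * (2 * real (2::nat) - 1) * (\<bar>x-1/2\<bar> + 1/N)^(2*2-2)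
          + A2 * (real m * (2 * real m - 1)) * (\<bar>x-1/2\<bar> + 1/N)^(2*m-2)
        \<le> (2 * K2) * (x-1/2)^2 + (2 * K2 / N^2) * 1"
        unfolding b_def by (simp add: algebra_simps)
    qed
    also have "\<dots> = (2 * K2) * E n (\<lambda>x. (x-1/2)^2) + (2 * K2 / N^2) * E n (\<lambda>x. 1)" by (rule E_lin)
    also have "\<dots> \<le> (2 * K2) * (C1 / N) + (2 * K2 / N) * 1"
    proof (rule add_mono)
      show "(2 * K2) * E n (\<lambda>x. (x-1/2)^2) \<le> (2 * K2) * (C1 / N)"
        using m1[of n] K2 unfolding N_def by (intro mult_left_mono) auto
      have "2 * K2 / N^2 \<le> 2 * K2 / N" using N1 K2 by (intro divide_left_mono) (auto simp: power2_eq_square)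
      thus "(2 * K2 / N^2) * E n (\<lambda>x. 1) \<le> (2 * K2 / N) * 1" using E_const by simp
    qed
    also have "\<dots> = K2 * (2 * C1 + 2) / N" by (simp add: algebra_simps add_divide_distrib)
    finally have en: "E n (\<lambda>x. real (2::nat) * (2 * real (2::nat) - 1) * (\<bar>x-1/2\<bar> + 1/N)^(2*2-2)
          + A2 * (real m * (2 * real m - 1)) * (\<bar>x-1/2\<bar> + 1/N)^(2*m-2)) \<le> K2 * (2 * C1 + 2) / N" .
    have "(1 / N^2) * E n (\<lambda>x. real (2::nat) * (2 * real (2::nat) - 1) * (\<bar>x-1/2\<bar> + 1/N)^(2*2-2)
          + A2 * (real m * (2 * real m - 1)) * (\<bar>x-1/2\<bar> + 1/N)^(2*m-2)) \<le> (1 / N^2) * (K2 * (2 * C1 + 2) / N)"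
      using en by (intro mult_left_mono) auto
    also have "\<dots> = (K2 * (2 * C1 + 2)) / N^(Suc 2)" by (simp add: field_simps power2_eq_square power3_eq_cube)
    finally have "X2 (Suc n) \<le> (1 - 3 / N) * X2 n + (K2 * (2 * C1 + 2)) / N^(Suc 2)" using st by simp
    thus ?thesis unfolding N_def LN .
  qed
  obtain C2 where C2: "\<forall>n. X2 n \<le> C2 / (N0 + real n)^2"
  proof -
    have "\<exists>C. \<forall>n. X2 n \<le> C / (N0 + real n)^2"
    proof (rule rec_bound[OF N0 _ _ _ _ rec2])
      show "3 > real (2::nat)" by simp
      show "K2 * (2 * C1 + 2) \<ge> 0" using K2 C1pos by simp
      show "0 \<le> X2 n" for n unfolding X2_def by (rule E_nonneg) (rule Vf_nonneg[OF A2])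
      show "X2 n \<le> 1 + A2" for n unfolding X2_def
        using E_mono[of "Vf 2 m A2" "\<lambda>x. 1 + A2" n] Vf_le[OF A2] E_const by simp
    qed
    thus ?thesis using that by blast
  qed
  have m2': "E n (\<lambda>x. (x-1/2)^4) \<le> C2 / (L n + 1)^2" for n
  proof -
    have "E n (\<lambda>x. (x-1/2)^4) \<le> X2 n" unfolding X2_def
      by (rule E_mono) (use A2 in \<open>simp add: Vf_def power_mult\<close>)
    moreover have "X2 n \<le> C2 / (N0 + real n)^2" using C2 by simp
    ultimately show ?thesis unfolding LN by linarith
  qed
  show ?thesis using m1 m2' by blast
qed

end




lemma cube_amgm:
  fixes u s :: real assumes s: "s > 0"
  shows "\<bar>u\<bar>^3 \<le> s * u^4 + (1/s) * u^2"
proof -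
  have "0 \<le> (s * u^2 - \<bar>u\<bar>)^2 / s" using s by simp
  also have "(s * u^2 - \<bar>u\<bar>)^2 / s = s * u^4 - 2 * \<bar>u\<bar>^3 + (1/s) * u^2"
    using s by (simp add: field_simps power2_eq_square power3_eq_cube)
       (simp add: algebra_simps abs_mult_self_eq power2_eq_square[symmetric] power4_eq_xxxx)
  finally have "2 * \<bar>u\<bar>^3 \<le> s * u^4 + (1/s) * u^2" by simp
  moreover have "\<bar>u\<bar>^3 \<ge> 0" by simp
  ultimately show ?thesis by linarith
qed

lemma summable_powr32:
  fixes N0 :: real assumes N0: "N0 \<ge> 1"
  shows "summable (\<lambda>n. (N0 + real n) powr (-3/2))"
proof (rule summable_comparison_test')
  show "summable (\<lambda>n. real (Suc n) powr (-3/2))"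
    using summable_Suc_iff[of "\<lambda>n. real n powr (-3/2)"] summable_real_powr_iff[of "-3/2"] by simp
  show "norm ((N0 + real n) powr (-3/2)) \<le> real (Suc n) powr (-3/2)" for n
    using N0 by (auto intro!: powr_mono2')
qed

context urn_loc begin

lemma cube_bound:
  assumes m: "\<forall>n. E n (\<lambda>x. (x-1/2)^2) \<le> C1 / (L n + 1) \<and> E n (\<lambda>x. (x-1/2)^4) \<le> C2 / (L n + 1)^2"
  shows "E n (\<lambda>x. \<bar>x-1/2\<bar>^3) \<le> (C1 + C2) * (L n + 1) powr (-3/2)"
proof -
  define N where "N = L n + 1"
  have N: "N > 0" using L_pos[of n] by (simp add: N_def)
  define s where "s = sqrt N"
  have s: "s > 0" "s * s = N" using N by (simp_all add: s_def)
  have "E n (\<lambda>x. \<bar>x-1/2\<bar>^3) \<le> E n (\<lambda>x. s * (x-1/2)^4 + (1/s) * (x-1/2)^2)"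
    by (rule E_mono) (rule cube_amgm[OF s(1)])
  also have "\<dots> = s * E n (\<lambda>x. (x-1/2)^4) + (1/s) * E n (\<lambda>x. (x-1/2)^2)" by (rule E_lin)
  also have "\<dots> \<le> s * (C2 / N^2) + (1/s) * (C1 / N)"
    using m s unfolding N_def by (intro add_mono mult_left_mono) auto
  also have "\<dots> = (C1 + C2) / (N * s)"
    using s N by (simp add: field_simps power2_eq_square)
  also have "N * s = N powr (3/2)"
  proof -
    have "N powr (3/2) = N powr (1 + 1/2)" by simp
    also have "\<dots> = N powr 1 * N powr (1/2)" by (rule powr_add)
    also have "\<dots> = N * N powr (1/2)" using N by simp
    finally show ?thesis using N by (simp add: s_def powr_half_sqrt)
  qed
  finally show ?thesis unfolding N_def by (simp add: powr_minus_divide)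
qed

end




lemma conv_neg:
  fixes a :: "nat \<Rightarrow> real"
  assumes fin: "(\<Sum>k. ennreal (max 0 (- a k))) \<noteq> top"
  shows "\<exists>Lm. (\<lambda>n. ereal (\<Sum>k\<le>n. a k)) \<longlonglongrightarrow> Lm \<and> e2ennreal (- Lm) \<le> (\<Sum>k. ennreal (max 0 (- a k)))"
proof -
  define b where "b k = max 0 (- a k)" for k
  define p where "p k = max 0 (a k)" for k
  have bs: "summable b" using summable_suminf_not_top[of b] fin unfolding b_def by simp
  define q where "q = suminf b"
  have ab: "(\<Sum>k\<le>n. a k) = (\<Sum>k\<le>n. p k) - (\<Sum>k\<le>n. b k)" for n
    unfolding p_def b_def sum_subtractf[symmetric] by (intro sum.cong) auto
  have inc: "incseq (\<lambda>n. ereal (\<Sum>k\<le>n. p k))"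
    unfolding incseq_def p_def by (auto intro!: sum_mono2)
  define Lp where "Lp = (SUP n. ereal (\<Sum>k\<le>n. p k))"
  have t1: "(\<lambda>n. ereal (\<Sum>k\<le>n. p k)) \<longlonglongrightarrow> Lp" unfolding Lp_def by (rule LIMSEQ_SUP[OF inc])
  have t2: "(\<lambda>n. ereal (- (\<Sum>k\<le>n. b k))) \<longlonglongrightarrow> ereal (- q)"
    unfolding q_def by (intro tendsto_intros summable_LIMSEQ'[OF bs])
  have t3: "(\<lambda>n. ereal (\<Sum>k\<le>n. p k) + ereal (- (\<Sum>k\<le>n. b k))) \<longlonglongrightarrow> Lp + ereal (- q)"
    by (rule tendsto_add_ereal_general1[OF _ t1 t2]) simp
  have e: "ereal (\<Sum>k\<le>n. p k) + ereal (- (\<Sum>k\<le>n. b k)) = ereal (\<Sum>k\<le>n. a k)" for n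
    unfolding ab by simp
  have Lp0: "Lp \<ge> 0"
  proof -
    have "ereal (\<Sum>k\<le>0. p k) \<le> Lp" unfolding Lp_def by (rule SUP_upper) simp
    moreover have "(\<Sum>k\<le>0. p k) \<ge> 0" by (simp add: p_def)
    ultimately show ?thesis by (meson ereal_less_eq(5) order_trans)
  qed
  have "Lp + ereal (- q) \<ge> 0 + ereal (- q)" using Lp0 by (intro add_right_mono)
  hence "- (Lp + ereal (- q)) \<le> ereal q" by (simp add: ereal_uminus_le_reorder)
  hence "e2ennreal (- (Lp + ereal (- q))) \<le> e2ennreal (ereal q)" by (rule e2ennreal_mono)
  also have "\<dots> = (\<Sum>k. ennreal (max 0 (- a k)))"
    using suminf_ennreal2[of b, OF _ bs] unfolding q_def b_def by simp
  finally show ?thesis using t3 unfolding e by blast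
qed

context urn_loc begin

lemma E_cmult: "E n (\<lambda>x. a * g x) = a * E n g"
  unfolding E_def by simp

lemma series_fin:
  assumes g0: "\<And>x. 0 \<le> x \<Longrightarrow> x \<le> 1 \<Longrightarrow> 0 \<le> g x"
    and gb: "\<And>x. 0 \<le> x \<Longrightarrow> x \<le> 1 \<Longrightarrow> g x \<le> K * \<bar>x-1/2\<bar>^3"
    and K: "K \<ge> 0" and D: "D \<ge> 0"
    and cb: "\<And>n. E n (\<lambda>x. \<bar>x-1/2\<bar>^3) \<le> D * (L n + 1) powr (-3/2)"
  shows "(\<integral>\<^sup>+\<omega>. (\<Sum>k. ennreal (g (\<alpha> k \<omega>))) \<partial>M) < \<infinity>"
proof -
  have "(\<integral>\<^sup>+\<omega>. (\<Sum>k. ennreal (g (\<alpha> k \<omega>))) \<partial>M) = (\<Sum>k. (\<integral>\<^sup>+\<omega>. ennreal (g (\<alpha> k \<omega>)) \<partial>M))"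
    by (rule nn_integral_suminf) (rule meas_en)
  also have "\<dots> = (\<Sum>k. ennreal (E k g))" using E_nn[of g, OF g0] by simp
  also have "\<dots> \<le> (\<Sum>k. ennreal (K * D * (L k + 1) powr (-3/2)))"
  proof (rule suminf_le)
    fix k
    have "E k g \<le> E k (\<lambda>x. K * \<bar>x-1/2\<bar>^3)" by (rule E_mono) (rule gb)
    also have "\<dots> = K * E k (\<lambda>x. \<bar>x-1/2\<bar>^3)" by (rule E_cmult)
    also have "\<dots> \<le> K * (D * (L k + 1) powr (-3/2))" using cb K by (intro mult_left_mono) auto
    finally show "ennreal (E k g) \<le> ennreal (K * D * (L k + 1) powr (-3/2))"
      by (intro ennreal_leI) (simp add: mult.assoc)
  qed auto
  also have "\<dots> < \<infinity>"
  proof -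
    have "summable (\<lambda>k. (l0 + 1 + real k) powr (-3/2))" by (rule summable_powr32) (use l0 in simp)
    hence "summable (\<lambda>k. K * D * (L k + 1) powr (-3/2))"
      by (intro summable_mult) (simp add: L_def add.commute add.left_commute)
    hence "(\<Sum>k. ennreal (K * D * (L k + 1) powr (-3/2))) \<noteq> top"
      by (rule ennreal_suminf_neq_top) (use K D in simp)
    thus ?thesis by (simp add: top.not_eq_extremum)
  qed
  finally show ?thesis .
qed

end




theorem proposition2:
  fixes f f1 f2 f3 :: "real \<Rightarrow> real"
    and M :: "'a measure"
    and \<alpha> l :: "nat \<Rightarrow> 'a \<Rightarrow> real"
  assumes f_range: "\<forall>x\<in>{0..1}. 0 < f x \<and> f x < 1"
    and d1: "\<forall>x\<in>{0..1}. (f has_real_derivative f1 x) (at x within {0..1})"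
    and d2: "\<forall>x\<in>{0..1}. (f1 has_real_derivative f2 x) (at x within {0..1})"
    and d3: "\<forall>x\<in>{0..1}. (f2 has_real_derivative f3 x) (at x within {0..1})"
    and cont3: "continuous_on {0..1} f3"
    and fixpt: "f (1/2) = 1/2"
    and fix_unique: "\<forall>x\<in>{0..1}. f x = x \<longrightarrow> x = 1/2"
    and deriv_zero: "f1 (1/2) = 0"
    and urn: "urn_process M f \<alpha> l"
  shows "(f2 (1/2) > 0 \<longrightarrow> (\<integral>\<^sup>+\<omega>. urn_delta_minus f \<alpha> \<omega> \<partial>M) < \<infinity>)
       \<and> (f2 (1/2) < 0 \<longrightarrow> (\<integral>\<^sup>+\<omega>. urn_delta_plus f \<alpha> \<omega> \<partial>M) < \<infinity>)
       \<and> (f2 (1/2) = 0 \<longrightarrow> (\<integral>\<^sup>+\<omega>. urn_delta_minus f \<alpha> \<omega> \<partial>M) < \<infinity>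
                         \<and> (\<integral>\<^sup>+\<omega>. urn_delta_plus f \<alpha> \<omega> \<partial>M) < \<infinity>)
       \<and> (AE \<omega> in M. \<exists>L :: ereal. (\<lambda>n. ereal (urn_delta f \<alpha> n \<omega>)) \<longlonglongrightarrow> L)
       \<and> ((\<integral>\<^sup>+\<omega>. e2ennreal (lim (\<lambda>n. ereal (urn_delta f \<alpha> n \<omega>))) \<partial>M) < \<infinity>
          \<or> (\<integral>\<^sup>+\<omega>. e2ennreal (- lim (\<lambda>n. ereal (urn_delta f \<alpha> n \<omega>))) \<partial>M) < \<infinity>)"
proof -
  have up: "prob_space M" "\<forall>n. \<alpha> n \<in> borel_measurable M"
     "\<exists>a0 l0. 0 \<le> a0 \<and> a0 \<le> 1 \<and> 0 < l0 \<and> (\<forall>\<omega>\<in>space M. \<alpha> 0 \<omega> = a0 \<and> l 0 \<omega> = l0)"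
     "\<forall>n. \<forall>\<omega>\<in>space M. l (Suc n) \<omega> = l n \<omega> + 1"
     "\<forall>n. \<forall>\<omega>\<in>space M. \<alpha> (Suc n) \<omega> = urn_up (\<alpha> n \<omega>) (l n \<omega>) \<or>
                         \<alpha> (Suc n) \<omega> = urn_down (\<alpha> n \<omega>) (l n \<omega>)"
     "\<forall>n (B :: nat \<Rightarrow> real set). (\<forall>i. B i \<in> sets borel) \<longrightarrow>
        measure M {\<omega> \<in> space M. (\<forall>i\<le>n. \<alpha> i \<omega> \<in> B i) \<and>
                                 \<alpha> (Suc n) \<omega> = urn_up (\<alpha> n \<omega>) (l n \<omega>)}
        = (\<integral>\<omega>. indicator {\<omega> \<in> space M. \<forall>i\<le>n. \<alpha> i \<omega> \<in> B i} \<omega> * f (\<alpha> n \<omega>) \<partial>M)"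
  proof -
    note uu = urn[unfolded urn_process_def]
    show "prob_space M" using uu by (rule conjunct1)
    show "\<forall>n. \<alpha> n \<in> borel_measurable M" using uu[THEN conjunct2] by (rule conjunct1)
    show "\<exists>a0 l0. 0 \<le> a0 \<and> a0 \<le> 1 \<and> 0 < l0 \<and> (\<forall>\<omega>\<in>space M. \<alpha> 0 \<omega> = a0 \<and> l 0 \<omega> = l0)"
      using uu[THEN conjunct2, THEN conjunct2] by (rule conjunct1)
    show "\<forall>n. \<forall>\<omega>\<in>space M. l (Suc n) \<omega> = l n \<omega> + 1"
      using uu[THEN conjunct2, THEN conjunct2, THEN conjunct2] by (rule conjunct1)
    show "\<forall>n. \<forall>\<omega>\<in>space M. \<alpha> (Suc n) \<omega> = urn_up (\<alpha> n \<omega>) (l n \<omega>) \<or>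
                         \<alpha> (Suc n) \<omega> = urn_down (\<alpha> n \<omega>) (l n \<omega>)"
      using uu[THEN conjunct2, THEN conjunct2, THEN conjunct2, THEN conjunct2] by (rule conjunct1)
    show "\<forall>n (B :: nat \<Rightarrow> real set). (\<forall>i. B i \<in> sets borel) \<longrightarrow>
        measure M {\<omega> \<in> space M. (\<forall>i\<le>n. \<alpha> i \<omega> \<in> B i) \<and>
                                 \<alpha> (Suc n) \<omega> = urn_up (\<alpha> n \<omega>) (l n \<omega>)}
        = (\<integral>\<omega>. indicator {\<omega> \<in> space M. \<forall>i\<le>n. \<alpha> i \<omega> \<in> B i} \<omega> * f (\<alpha> n \<omega>) \<partial>M)"
      using uu[THEN conjunct2, THEN conjunct2, THEN conjunct2, THEN conjunct2] by (rule conjunct2)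
  qed
  obtain a0 l0 where a0l0: "0 \<le> a0" "a0 \<le> 1" "0 < l0" "\<forall>\<omega>\<in>space M. \<alpha> 0 \<omega> = a0 \<and> l 0 \<omega> = l0"
    using up(3) by blast
  have ul: "urn_loc M f \<alpha> l a0 l0"
  proof (rule urn_loc.intro)
    show "prob_space M" by (rule up(1))
    show "\<And>n. \<alpha> n \<in> borel_measurable M" using up(2) by blast
    show "0 \<le> a0" "a0 \<le> 1" "0 < l0" by (rule a0l0)+
    show "\<And>\<omega>. \<omega> \<in> space M \<Longrightarrow> \<alpha> 0 \<omega> = a0 \<and> l 0 \<omega> = l0" using a0l0(4) by blast
    show "\<And>n \<omega>. \<omega> \<in> space M \<Longrightarrow> l (Suc n) \<omega> = l n \<omega> + 1" using up(4) by blast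
    show "\<And>n \<omega>. \<omega> \<in> space M \<Longrightarrow> \<alpha> (Suc n) \<omega> = urn_up (\<alpha> n \<omega>) (l n \<omega>) \<or>
                         \<alpha> (Suc n) \<omega> = urn_down (\<alpha> n \<omega>) (l n \<omega>)" using up(5) by blast
    show "\<And>n (B :: nat \<Rightarrow> real set). (\<forall>i. B i \<in> sets borel) \<Longrightarrow>
        measure M {\<omega> \<in> space M. (\<forall>i\<le>n. \<alpha> i \<omega> \<in> B i) \<and>
                                 \<alpha> (Suc n) \<omega> = urn_up (\<alpha> n \<omega>) (l n \<omega>)}
        = (\<integral>\<omega>. indicator {\<omega> \<in> space M. \<forall>i\<le>n. \<alpha> i \<omega> \<in> B i} \<omega> * f (\<alpha> n \<omega>) \<partial>M)"
      using up(6) by blast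
  qed
  interpret U: urn_loc M f \<alpha> l a0 l0 by (rule ul)
  have cont: "continuous_on {0..1} f"
    by (rule DERIV_continuous_on) (use d1 in auto)
  obtain Mt where Mt: "Mt \<ge> 0" "\<forall>x\<in>{0..1}. \<bar>f x - 1/2 - f2 (1/2) / 2 * (x - 1/2)^2\<bar> \<le> Mt * \<bar>x - 1/2\<bar>^3"
    using taylor2[OF d1 d2 d3 cont3 fixpt deriv_zero] by blast
  obtain c \<delta> where cd: "0 < c" "0 < \<delta>"
     "\<forall>x\<in>{0..1}. (x - 1/2) * (x - f x) \<ge> c * (x - 1/2)^2"
     "\<forall>x\<in>{0..1}. \<bar>x - 1/2\<bar> < \<delta> \<longrightarrow> (x - 1/2) * (x - f x) \<ge> 3/4 * (x - 1/2)^2"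
    using contraction[OF cont f_range fix_unique Mt(2) Mt(1)] by blast
  have fr: "\<forall>x\<in>{0..1}. 0 \<le> f x \<and> f x \<le> 1" using f_range by (auto simp: less_imp_le)
  obtain C1 C2 where CC: "\<forall>n. U.E n (\<lambda>x. (x-1/2)^2) \<le> C1 / (U.L n + 1) \<and> U.E n (\<lambda>x. (x-1/2)^4) \<le> C2 / (U.L n + 1)^2"
    using U.moments[OF fr cd(1) cd(2) cd(3) cd(4)] by blast
  define D where "D = max 0 (C1 + C2)"
  have D: "D \<ge> 0" by (simp add: D_def)
  have cb: "U.E n (\<lambda>x. \<bar>x-1/2\<bar>^3) \<le> D * (U.L n + 1) powr (-3/2)" for n
  proof -
    have "U.E n (\<lambda>x. \<bar>x-1/2\<bar>^3) \<le> (C1 + C2) * (U.L n + 1) powr (-3/2)" by (rule U.cube_bound[OF CC])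
    also have "\<dots> \<le> D * (U.L n + 1) powr (-3/2)" by (intro mult_right_mono) (auto simp: D_def)
    finally show ?thesis .
  qed
  have K: "2 * Mt \<ge> 0" using Mt by simp
  have T': "f x - 1/2 - f2 (1/2) / 2 * (x - 1/2)^2 \<le> Mt * \<bar>x - 1/2\<bar>^3"
     "- (Mt * \<bar>x - 1/2\<bar>^3) \<le> f x - 1/2 - f2 (1/2) / 2 * (x - 1/2)^2" if "0 \<le> x" "x \<le> 1" for x
  proof -
    have h: "\<bar>f x - 1/2 - f2 (1/2) / 2 * (x - 1/2)^2\<bar> \<le> Mt * \<bar>x - 1/2\<bar>^3" using Mt(2) that by auto
    show "f x - 1/2 - f2 (1/2) / 2 * (x - 1/2)^2 \<le> Mt * \<bar>x - 1/2\<bar>^3" using h by linarith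
    show "- (Mt * \<bar>x - 1/2\<bar>^3) \<le> f x - 1/2 - f2 (1/2) / 2 * (x - 1/2)^2" using h by linarith
  qed
  have cu: "0 \<le> Mt * \<bar>x - 1/2\<bar>^3" for x using Mt by simp
  have Hm: "(\<integral>\<^sup>+\<omega>. urn_delta_minus f \<alpha> \<omega> \<partial>M) < \<infinity>" if a: "f2 (1/2) \<ge> 0"
    unfolding urn_delta_minus_def
  proof (rule U.series_fin[of "\<lambda>x. max 0 (- (2 * f x - 1))" "2 * Mt", OF _ _ K D cb])
    fix x :: real assume x: "0 \<le> x" "x \<le> 1"
    have "f2 (1/2) / 2 * (x - 1/2)^2 \<ge> 0" using a by simp
    hence "- (2 * f x - 1) \<le> 2 * Mt * \<bar>x - 1/2\<bar>^3" using T'(2)[OF x] by linarith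
    thus "max 0 (- (2 * f x - 1)) \<le> 2 * Mt * \<bar>x - 1/2\<bar>^3" using cu[of x] by simp
  qed simp
  have Hp: "(\<integral>\<^sup>+\<omega>. urn_delta_plus f \<alpha> \<omega> \<partial>M) < \<infinity>" if a: "f2 (1/2) \<le> 0"
    unfolding urn_delta_plus_def
  proof (rule U.series_fin[of "\<lambda>x. max 0 (2 * f x - 1)" "2 * Mt", OF _ _ K D cb])
    fix x :: real assume x: "0 \<le> x" "x \<le> 1"
    have "f2 (1/2) / 2 * (x - 1/2)^2 \<le> 0" using a by (simp add: mult_nonpos_nonneg)
    hence "2 * f x - 1 \<le> 2 * Mt * \<bar>x - 1/2\<bar>^3" using T'(1)[OF x] by linarith
    thus "max 0 (2 * f x - 1) \<le> 2 * Mt * \<bar>x - 1/2\<bar>^3" using cu[of x] by simp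
  qed simp
  have measm: "urn_delta_minus f \<alpha> \<in> borel_measurable M"
    unfolding urn_delta_minus_def
    by (rule borel_measurable_suminf_order) (use U.meas_en[of "\<lambda>x. max 0 (- (2 * f x - 1))"] in simp)
  have measp: "urn_delta_plus f \<alpha> \<in> borel_measurable M"
    unfolding urn_delta_plus_def
    by (rule borel_measurable_suminf_order) (use U.meas_en[of "\<lambda>x. max 0 (2 * f x - 1)"] in simp)
  define dl where "dl \<omega> = (\<lambda>n. ereal (urn_delta f \<alpha> n \<omega>))" for \<omega>
  have lastpart: "(AE \<omega> in M. \<exists>L :: ereal. dl \<omega> \<longlonglongrightarrow> L)
       \<and> ((\<integral>\<^sup>+\<omega>. e2ennreal (lim (dl \<omega>)) \<partial>M) < \<infinity>
          \<or> (\<integral>\<^sup>+\<omega>. e2ennreal (- lim (dl \<omega>)) \<partial>M) < \<infinity>)"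
  proof (cases "f2 (1/2) \<ge> 0")
    case True
    have fin: "(\<integral>\<^sup>+\<omega>. urn_delta_minus f \<alpha> \<omega> \<partial>M) < \<infinity>" by (rule Hm[OF True])
    have ae: "AE \<omega> in M. urn_delta_minus f \<alpha> \<omega> \<noteq> \<infinity>"
      by (rule nn_integral_PInf_AE[OF measm]) (use fin in simp)
    have ae2: "AE \<omega> in M. (\<exists>L. dl \<omega> \<longlonglongrightarrow> L) \<and> e2ennreal (- lim (dl \<omega>)) \<le> urn_delta_minus f \<alpha> \<omega>"
      using ae
    proof (rule AE_mp, intro AE_I2 impI)
      fix \<omega> assume "urn_delta_minus f \<alpha> \<omega> \<noteq> \<infinity>"
      hence "(\<Sum>k. ennreal (max 0 (- (2 * f (\<alpha> k \<omega>) - 1)))) \<noteq> top"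
        unfolding urn_delta_minus_def by simp
      from conv_neg[OF this] obtain Lm where Lm: "dl \<omega> \<longlonglongrightarrow> Lm"
        "e2ennreal (- Lm) \<le> (\<Sum>k. ennreal (max 0 (- (2 * f (\<alpha> k \<omega>) - 1))))"
        unfolding dl_def urn_delta_def by blast
      have "lim (dl \<omega>) = Lm" using Lm(1) by (rule limI)
      thus "(\<exists>L. dl \<omega> \<longlonglongrightarrow> L) \<and> e2ennreal (- lim (dl \<omega>)) \<le> urn_delta_minus f \<alpha> \<omega>"
        using Lm unfolding urn_delta_minus_def by auto
    qed
    have "(\<integral>\<^sup>+\<omega>. e2ennreal (- lim (dl \<omega>)) \<partial>M) \<le> (\<integral>\<^sup>+\<omega>. urn_delta_minus f \<alpha> \<omega> \<partial>M)"
      by (rule nn_integral_mono_AE) (use ae2 in \<open>auto elim: AE_mp\<close>)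
    hence "(\<integral>\<^sup>+\<omega>. e2ennreal (- lim (dl \<omega>)) \<partial>M) < \<infinity>" using fin by (rule le_less_trans)
    moreover have "AE \<omega> in M. \<exists>L :: ereal. dl \<omega> \<longlonglongrightarrow> L" using ae2 by (auto elim: AE_mp)
    ultimately show ?thesis by blast
  next
    case False
    hence F: "f2 (1/2) \<le> 0" by simp
    have fin: "(\<integral>\<^sup>+\<omega>. urn_delta_plus f \<alpha> \<omega> \<partial>M) < \<infinity>" by (rule Hp[OF F])
    have ae: "AE \<omega> in M. urn_delta_plus f \<alpha> \<omega> \<noteq> \<infinity>"
      by (rule nn_integral_PInf_AE[OF measp]) (use fin in simp)
    have ae2: "AE \<omega> in M. (\<exists>L. dl \<omega> \<longlonglongrightarrow> L) \<and> e2ennreal (lim (dl \<omega>)) \<le> urn_delta_plus f \<alpha> \<omega>"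
      using ae
    proof (rule AE_mp, intro AE_I2 impI)
      fix \<omega> assume "urn_delta_plus f \<alpha> \<omega> \<noteq> \<infinity>"
      hence "(\<Sum>k. ennreal (max 0 (- (- (2 * f (\<alpha> k \<omega>) - 1))))) \<noteq> top"
        unfolding urn_delta_plus_def by simp
      from conv_neg[OF this] obtain Lm where Lm: "(\<lambda>n. ereal (\<Sum>k\<le>n. - (2 * f (\<alpha> k \<omega>) - 1))) \<longlonglongrightarrow> Lm"
        "e2ennreal (- Lm) \<le> (\<Sum>k. ennreal (max 0 (- (- (2 * f (\<alpha> k \<omega>) - 1)))))"
        by blast
      have "(\<lambda>n. - ereal (\<Sum>k\<le>n. - (2 * f (\<alpha> k \<omega>) - 1))) \<longlonglongrightarrow> - Lm"
        using Lm(1) by (rule tendsto_uminus_ereal)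
      moreover have "(\<lambda>n. - ereal (\<Sum>k\<le>n. - (2 * f (\<alpha> k \<omega>) - 1))) = dl \<omega>"
        unfolding dl_def urn_delta_def
      proof (intro ext)
        fix n
        have "(\<Sum>k\<le>n. - (2 * f (\<alpha> k \<omega>) - 1)) = - (\<Sum>k\<le>n. 2 * f (\<alpha> k \<omega>) - 1)"
          by (rule sum_negf)
        thus "- ereal (\<Sum>k\<le>n. - (2 * f (\<alpha> k \<omega>) - 1)) = ereal (\<Sum>k\<le>n. 2 * f (\<alpha> k \<omega>) - 1)"
          by simp
      qed
      ultimately have l: "dl \<omega> \<longlonglongrightarrow> - Lm" by simp
      have "lim (dl \<omega>) = - Lm" using l by (rule limI)
      thus "(\<exists>L. dl \<omega> \<longlonglongrightarrow> L) \<and> e2ennreal (lim (dl \<omega>)) \<le> urn_delta_plus f \<alpha> \<omega>"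
        using l Lm(2) unfolding urn_delta_plus_def by auto
    qed
    have "(\<integral>\<^sup>+\<omega>. e2ennreal (lim (dl \<omega>)) \<partial>M) \<le> (\<integral>\<^sup>+\<omega>. urn_delta_plus f \<alpha> \<omega> \<partial>M)"
      by (rule nn_integral_mono_AE) (use ae2 in \<open>auto elim: AE_mp\<close>)
    hence "(\<integral>\<^sup>+\<omega>. e2ennreal (lim (dl \<omega>)) \<partial>M) < \<infinity>" using fin by (rule le_less_trans)
    moreover have "AE \<omega> in M. \<exists>L :: ereal. dl \<omega> \<longlonglongrightarrow> L" using ae2 by (auto elim: AE_mp)
    ultimately show ?thesis by blast
  qed
  show ?thesis using Hm Hp lastpart unfolding dl_def by force
qed

end
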